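(* Let $V$ be smooth with compact support in $[1,2]$, $X\ge2$, and $r$ a nonzero integer with $|r|\le 3X^2$. For each positive divisor $l$ of $r$ put $r_1=r/l$, and for positive integers $a,c$ put \[ \widehat{V_{a,c}}(0)=\int_{\mathbb{R}}V\!\left(\frac tX\right)V\!\left(\frac{r_1+tc}{aX}\right)dt . \] Define \[ M_V(X,r)=\sum_{l\mid r}\ \sum_{\substack{a_1,c_1\ge1\\ (a_1,c_1)=1}}\frac1{a_1}V\!\left(\frac{la_1}{X}\right)V\!\left(\frac{lc_1}{X}\right)\widehat{V_{a_1,c_1}}(0). \] Then for every $\varepsilon>0$, \[ M_V(X,r)=\sum_{l\mid r}\sum_{k\ge1}\frac{\mu(k)}{k}\iiint_{\mathbb{R}^3}\frac1z V\!\left(\frac xX\right)V\!\left(\frac{lky}{X}\right)V\!\left(\frac{lkz}{X}\right)V\!\left(\frac{r+lkxy}{zlkX}\right)dx\,dy\,dz+O_{\varepsilon,V}\big(\tau(|r|)X^{1+\varepsilon}\big), \] where $\tau$ is the divisor function and $l$ runs over positive divisors of $r$. *)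

theory Defs
  imports "HOL-Analysis.Analysis" "HOL-Computational_Algebra.Squarefree"
begin

definition moebius_mu :: "nat \<Rightarrow> real" where
  "moebius_mu n = (if n = 0 then 0 else if squarefree n then (-1) ^ card (prime_factors n) else 0)"

definition divisor_tau :: "nat \<Rightarrow> nat" where
  "divisor_tau n = card {d. d dvd n}"

definition smooth_fun :: "(real \<Rightarrow> real) \<Rightarrow> bool" where
  "smooth_fun V \<longleftrightarrow> (\<forall>n. ((deriv ^^ n) V) differentiable_on UNIV)"

definition pos_divisors :: "int \<Rightarrow> nat set" where
  "pos_divisors r = {l. 0 < l \<and> int l dvd r}"

definition Vhat0 :: "(real \<Rightarrow> real) \<Rightarrow> real \<Rightarrow> int \<Rightarrow> nat \<Rightarrow> nat \<Rightarrow> real" where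
  "Vhat0 V X r1 a c = (\<integral>t. V (t / X) * V ((real_of_int r1 + t * real c) / (real a * X)) \<partial>lborel)"

definition M_V :: "(real \<Rightarrow> real) \<Rightarrow> real \<Rightarrow> int \<Rightarrow> real" where
  "M_V V X r = (\<Sum>l\<in>pos_divisors r.
     \<Sum>\<^sub>\<infinity>(a, c)\<in>{(a, c). 1 \<le> a \<and> 1 \<le> c \<and> coprime a c}.
        (1 / real a) * V (real l * real a / X) * V (real l * real c / X)
        * Vhat0 V X (r div int l) a c)"

definition main_integral :: "(real \<Rightarrow> real) \<Rightarrow> real \<Rightarrow> int \<Rightarrow> nat \<Rightarrow> nat \<Rightarrow> real" where
  "main_integral V X r l k = (\<integral>(x, y, z). (1 / z) * V (x / X) * V (real l * real k * y / X)
       * V (real l * real k * z / X)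
       * V ((real_of_int r + real l * real k * x * y) / (z * real l * real k * X)) \<partial>(lborel :: (real \<times> real \<times> real) measure))"

definition main_term :: "(real \<Rightarrow> real) \<Rightarrow> real \<Rightarrow> int \<Rightarrow> real" where
  "main_term V X r = (\<Sum>l\<in>pos_divisors r.
     \<Sum>\<^sub>\<infinity>k\<in>{k::nat. 1 \<le> k}. moebius_mu k / real k * main_integral V X r l k)"

end

theory Submission
  imports Defs
begin

lemma smooth_V_props:
  fixes V :: "real \<Rightarrow> real"
  assumes sm: "smooth_fun V" and supp: "\<And>t. t \<notin> {1..2} \<Longrightarrow> V t = 0"
  shows "continuous_on UNIV V"
    and "\<exists>B\<ge>0. \<forall>t. \<bar>V t\<bar> \<le> B"
    and "\<exists>L\<ge>0. \<forall>s t. \<bar>V s - V t\<bar> \<le> L * \<bar>s - t\<bar>"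
proof -
  have d0: "V differentiable_on UNIV" using sm unfolding smooth_fun_def by (metis funpow_0)
  have d1: "deriv V differentiable_on UNIV" using sm unfolding smooth_fun_def
    by (metis One_nat_def funpow_0 funpow_Suc_right comp_apply)
  show cV: "continuous_on UNIV V" using d0 differentiable_imp_continuous_on by blast
  have cdV: "continuous_on UNIV (deriv V)" using d1 differentiable_imp_continuous_on by blast
  have DV: "\<And>x. (V has_real_derivative deriv V x) (at x)"
    using d0 by (simp add: DERIV_deriv_iff_real_differentiable differentiable_on_def)
  have dz: "deriv V x = 0" if "x \<notin> {1..2}" for x
  proof -
    have "x < 1 \<or> x > 2" using that by auto
    then obtain S where S: "open S" "x \<in> S" "\<forall>y\<in>S. V y = 0"
    proof
      assume "x < 1" then show ?thesis using supp by (intro that[of "{..<1}"]) auto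
    next
      assume "x > 2" then show ?thesis using supp by (intro that[of "{2<..}"]) auto
    qed
    have "((\<lambda>_. 0) has_real_derivative 0) (at x)" by simp
    then have "(V has_real_derivative 0) (at x)"
      by (rule has_field_derivative_transform_within_open[OF _ S(1) S(2)]) (use S(3) in auto)
    then show ?thesis using DV DERIV_unique by blast
  qed
  have "compact (V ` {1..2})" by (intro compact_continuous_image continuous_on_subset[OF cV]) auto
  then obtain B where B: "B > 0" "\<forall>y\<in>V ` {1..2}. norm y \<le> B" using compact_imp_bounded bounded_pos by blast
  show "\<exists>B\<ge>0. \<forall>t. \<bar>V t\<bar> \<le> B"
  proof (intro exI[of _ B] conjI allI)
    fix t show "\<bar>V t\<bar> \<le> B" using B supp[of t] by (cases "t \<in> {1..2}") auto
  qed (use B in auto)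
  have "compact (deriv V ` {1..2})" by (intro compact_continuous_image continuous_on_subset[OF cdV]) auto
  then obtain L where L: "L > 0" "\<forall>y\<in>deriv V ` {1..2}. norm y \<le> L" using compact_imp_bounded bounded_pos by blast
  have Lall: "\<bar>deriv V x\<bar> \<le> L" for x using L dz[of x] by (cases "x \<in> {1..2}") auto
  have lip: "\<bar>V s - V t\<bar> \<le> L * \<bar>s - t\<bar>" if st: "s < t" for s t
  proof -
    obtain z where "V t - V s = (t - s) * deriv V z" using MVT2[of s t V "deriv V"] st DV by blast
    then have "\<bar>V s - V t\<bar> = (t - s) * \<bar>deriv V z\<bar>" using st by (simp add: abs_minus_commute[of "V s"] abs_mult)
    also have "\<dots> \<le> (t - s) * L" using Lall st by (intro mult_left_mono) auto
    finally show ?thesis using st by (simp add: mult.commute)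
  qed
  show "\<exists>L\<ge>0. \<forall>s t. \<bar>V s - V t\<bar> \<le> L * \<bar>s - t\<bar>"
  proof (intro exI[of _ L] conjI allI)
    fix s t :: real
    show "\<bar>V s - V t\<bar> \<le> L * \<bar>s - t\<bar>"
    proof (cases s t rule: linorder_cases)
      case greater then show ?thesis using lip[of t s] by (simp add: abs_minus_commute)
    qed (use lip in auto)
  qed (use L in auto)
qed

lemma count_nat_interval:
  fixes \<alpha> \<beta> :: real
  assumes "\<alpha> \<le> \<beta> + 1"
  shows "real (card {n::nat. \<alpha> \<le> real n \<and> real n \<le> \<beta>}) \<le> \<beta> - \<alpha> + 1"
proof (cases "\<beta> < 0")
  case True
  then have E: "{n::nat. \<alpha> \<le> real n \<and> real n \<le> \<beta>} = {}" by auto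
  show ?thesis unfolding E using assms by simp
next
  case False
  have sub: "{n::nat. \<alpha> \<le> real n \<and> real n \<le> \<beta>} \<subseteq> {nat \<lceil>\<alpha>\<rceil>..nat \<lfloor>\<beta>\<rfloor>}"
    by (auto simp: le_nat_iff nat_le_iff ceiling_le_iff le_floor_iff)
  have "card {n::nat. \<alpha> \<le> real n \<and> real n \<le> \<beta>} \<le> card {nat \<lceil>\<alpha>\<rceil>..nat \<lfloor>\<beta>\<rfloor>}"
    by (rule card_mono[OF _ sub]) auto
  also have "\<dots> = nat \<lfloor>\<beta>\<rfloor> + 1 - nat \<lceil>\<alpha>\<rceil>" by simp
  finally have c: "card {n::nat. \<alpha> \<le> real n \<and> real n \<le> \<beta>} \<le> nat \<lfloor>\<beta>\<rfloor> + 1 - nat \<lceil>\<alpha>\<rceil>" .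
  have "real (nat \<lfloor>\<beta>\<rfloor> + 1 - nat \<lceil>\<alpha>\<rceil>) \<le> \<beta> - \<alpha> + 1"
  proof (cases "nat \<lceil>\<alpha>\<rceil> \<le> nat \<lfloor>\<beta>\<rfloor> + 1")
    case True
    then have "real (nat \<lfloor>\<beta>\<rfloor> + 1 - nat \<lceil>\<alpha>\<rceil>) = real (nat \<lfloor>\<beta>\<rfloor>) + 1 - real (nat \<lceil>\<alpha>\<rceil>)"
      by (simp add: of_nat_diff)
    moreover have "real (nat \<lfloor>\<beta>\<rfloor>) \<le> \<beta>" using False by simp
    moreover have "real (nat \<lceil>\<alpha>\<rceil>) \<ge> \<alpha>" by (rule real_nat_ceiling_ge)
    ultimately show ?thesis by linarith
  next
    case False then have "nat \<lfloor>\<beta>\<rfloor> + 1 - nat \<lceil>\<alpha>\<rceil> = 0" by arith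
    then show ?thesis using assms by simp
  qed
  then show ?thesis using c by (meson of_nat_le_iff order_trans)
qed

lemma cont_compact_integrable:
  fixes f :: "'a::euclidean_space \<Rightarrow> real"
  assumes "continuous_on UNIV f" "compact S" "\<And>x. x \<notin> S \<Longrightarrow> f x = 0"
  shows "integrable lborel f"
proof -
  have "integrable lborel (\<lambda>x. indicator S x *\<^sub>R f x)"
    by (rule borel_integrable_compact[OF assms(2)]) (rule continuous_on_subset[OF assms(1)], simp)
  moreover have "(\<lambda>x. indicator S x *\<^sub>R f x) = f" using assms(3) by (auto simp: indicator_def fun_eq_iff)
  ultimately show ?thesis by simp
qed

lemma int_bound_interval:
  fixes f :: "real \<Rightarrow> real"
  assumes b: "\<And>t. \<bar>f t\<bar> \<le> K * indicator {\<alpha>..\<beta>} t" and ab: "\<alpha> \<le> \<beta>"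
  shows "\<bar>\<integral>t. f t \<partial>lborel\<bar> \<le> K * (\<beta> - \<alpha>)"
proof -
  have K0: "0 \<le> K" using b[of \<alpha>] ab by (simp add: indicator_def)
  have ii: "integrable lborel (\<lambda>t. K * indicator {\<alpha>..\<beta>} t)"
    using ab by (auto intro!: integrable_mult_right simp: integrable_indicator_iff)
  have iv: "(\<integral>t. K * indicator {\<alpha>..\<beta>} t \<partial>lborel) = K * (\<beta> - \<alpha>)" using ab by simp
  show ?thesis
  proof (cases "integrable lborel f")
    case True
    have "\<bar>\<integral>t. f t \<partial>lborel\<bar> \<le> (\<integral>t. K * indicator {\<alpha>..\<beta>} t \<partial>lborel)"
      by (rule integral_abs_bound_integral[OF True ii]) (use b in auto)
    then show ?thesis using iv by (simp add: ab)
  next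
    case False then show ?thesis using K0 ab by (simp add: not_integrable_integral_eq)
  qed
qed

lemma fubini_lborel:
  fixes f :: "'a::euclidean_space \<times> 'b::euclidean_space \<Rightarrow> real"
  assumes "integrable lborel f"
  shows "(\<integral>p. f p \<partial>lborel) = (\<integral>x. (\<integral>y. f (x,y) \<partial>lborel) \<partial>lborel)"
    and "integrable lborel (\<lambda>x. \<integral>y. f (x,y) \<partial>lborel)"
proof -
  have i: "integrable (lborel \<Otimes>\<^sub>M lborel) f" using assms by (simp add: lborel_prod)
  show "(\<integral>p. f p \<partial>lborel) = (\<integral>x. (\<integral>y. f (x,y) \<partial>lborel) \<partial>lborel)"
    using lborel_pair.integral_fst'[OF i] by (simp add: lborel_prod)
  show "integrable lborel (\<lambda>x. \<integral>y. f (x,y) \<partial>lborel)"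
    using lborel_pair.integrable_fst'[OF i] by simp
qed

lemma lip_continuous:
  fixes f :: "real \<Rightarrow> real"
  assumes lip: "\<And>s t. \<bar>f s - f t\<bar> \<le> L * \<bar>s - t\<bar>"
  shows "continuous_on UNIV f"
proof -
  have L0: "0 \<le> L" using lip[of 1 0] by simp
  have "L-lipschitz_on UNIV f" using L0 lip by (simp add: lipschitz_on_def dist_real_def)
  then show ?thesis by (rule lipschitz_on_continuous_on)
qed

lemma lattice1:
  fixes f :: "real \<Rightarrow> real" and N :: nat
  assumes lip: "\<And>s t. \<bar>f s - f t\<bar> \<le> L * \<bar>s - t\<bar>"
    and supp: "\<And>t. t \<notin> {\<alpha>..\<beta>} \<Longrightarrow> f t = 0"
    and pos: "0 < \<alpha>" "\<alpha> \<le> \<beta>"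
    and big: "\<And>n::nat. n > N \<Longrightarrow> f (real n) = 0"
  shows "\<bar>(\<Sum>n=1..N. f (real n)) - (\<integral>t. f t \<partial>lborel)\<bar> \<le> L * (\<beta> - \<alpha> + 2)"
proof -
  have L0: "0 \<le> L" using lip[of 1 0] by simp
  have cont: "continuous_on UNIV f" by (rule lip_continuous[OF lip])
  have intf: "integrable lborel f"
    by (rule cont_compact_integrable[OF cont, of "{\<alpha>..\<beta>}"]) (use supp in auto)
  define M where "M = nat \<lceil>\<beta>\<rceil>"
  have Mge: "\<beta> \<le> real M" unfolding M_def by (rule real_nat_ceiling_ge)
  have ion: "f integrable_on {a..b}" for a b by (rule integrable_continuous_interval) (rule continuous_on_subset[OF cont], simp)
  have I1: "(\<integral>t. f t \<partial>lborel) = integral {0..real M} f"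
  proof -
    have "(\<integral>t. f t \<partial>lborel) = integral UNIV f" using integral_lborel[OF intf] by simp
    also have "integral UNIV f = integral UNIV (\<lambda>x. if x \<in> {0..real M} then f x else 0)"
      by (rule integral_cong) (use supp pos Mge in force)
    also have "integral UNIV (\<lambda>x. if x \<in> {0..real M} then f x else 0) = integral {0..real M} f"
      by (rule integral_restrict_UNIV)
    finally show ?thesis .
  qed
  have I2: "integral {0..real n} f = (\<Sum>k<n. integral {real k..real k + 1} f)" for n
  proof (induction n)
    case 0 then show ?case by simp
  next
    case (Suc n)
    have "integral {0..real (Suc n)} f = integral {0..real n} f + integral {real n..real n + 1} f"
      using Henstock_Kurzweil_Integration.integral_combine[where a=0 and c="real n" and b="real (Suc n)" and f=f] ion by (simp add: add.commute)
    then show ?case using Suc by simp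
  qed
  have S1: "(\<Sum>n=1..N. f (real n)) = (\<Sum>k<M. f (real k + 1))"
  proof -
    have "(\<Sum>n=1..N. f (real n)) = (\<Sum>n=1..max N M. f (real n))"
      by (rule sum.mono_neutral_left) (use big in auto)
    also have "\<dots> = (\<Sum>n=1..M. f (real n))"
      by (rule sum.mono_neutral_right) (use supp Mge in \<open>auto intro!: supp\<close>)
    also have "\<dots> = (\<Sum>k<M. f (real k + 1))"
      using sum.atLeast1_atMost_eq[of "\<lambda>n. f (real n)" M] by (simp add: add.commute)
    finally show ?thesis .
  qed
  have termb: "\<bar>f (real k + 1) - integral {real k..real k + 1} f\<bar>
      \<le> (if \<alpha> \<le> real k + 1 \<and> real k \<le> \<beta> then L else 0)" for k
  proof (cases "\<alpha> \<le> real k + 1 \<and> real k \<le> \<beta>")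
    case True
    have "f (real k + 1) - integral {real k..real k + 1} f
        = integral {real k..real k + 1} (\<lambda>t. f (real k + 1) - f t)"
      by (subst integral_diff) (use ion in auto)
    also have "\<bar>\<dots>\<bar> \<le> L * Henstock_Kurzweil_Integration.content (cbox (real k) (real k + 1))"
    proof -
      have "norm (integral (cbox (real k) (real k + 1)) (\<lambda>t. f (real k + 1) - f t)) \<le> L * Henstock_Kurzweil_Integration.content (cbox (real k) (real k + 1))"
      proof (rule integrable_bound[OF L0])
        show "(\<lambda>t. f (real k + 1) - f t) integrable_on cbox (real k) (real k + 1)"
          using ion by (auto intro!: integrable_diff)
        fix t assume "t \<in> cbox (real k) (real k + 1)"
        then have "\<bar>real k + 1 - t\<bar> \<le> 1" by auto
        then show "norm (f (real k + 1) - f t) \<le> L"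
          using lip[of "real k + 1" t] L0 by simp (smt (verit) mult_left_le)
      qed
      then show ?thesis by simp
    qed
    finally show ?thesis using True by simp
  next
    case False
    have z: "f t = 0" if "t \<in> {real k..real k + 1}" for t using False that supp by force
    have "integral {real k..real k + 1} f = integral {real k..real k + 1} (\<lambda>_. 0)"
      by (rule integral_cong) (use z in auto)
    then show ?thesis using False z[of "real k + 1"] L0 by simp
  qed
  have "\<bar>(\<Sum>n=1..N. f (real n)) - (\<integral>t. f t \<partial>lborel)\<bar>
      = \<bar>\<Sum>k<M. (f (real k + 1) - integral {real k..real k + 1} f)\<bar>"
    unfolding S1 I1 I2 by (simp add: sum_subtractf)
  also have "\<dots> \<le> (\<Sum>k<M. \<bar>f (real k + 1) - integral {real k..real k + 1} f\<bar>)" by (rule sum_abs)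
  also have "\<dots> \<le> (\<Sum>k<M. (if \<alpha> \<le> real k + 1 \<and> real k \<le> \<beta> then L else 0))"
    by (rule sum_mono) (rule termb)
  also have "\<dots> = L * real (card {k\<in>{..<M}. \<alpha> \<le> real k + 1 \<and> real k \<le> \<beta>})"
    by (simp add: sum.If_cases Int_def)
  also have "\<dots> \<le> L * (\<beta> - (\<alpha> - 1) + 1)"
  proof -
    have fin: "finite {k::nat. \<alpha> - 1 \<le> real k \<and> real k \<le> \<beta>}"
      by (rule finite_subset[of _ "{..M}"]) (use Mge in auto)
    have "card {k\<in>{..<M}. \<alpha> \<le> real k + 1 \<and> real k \<le> \<beta>} \<le> card {k::nat. \<alpha> - 1 \<le> real k \<and> real k \<le> \<beta>}"
      by (rule card_mono[OF fin]) auto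
    then have "real (card {k\<in>{..<M}. \<alpha> \<le> real k + 1 \<and> real k \<le> \<beta>}) \<le> \<beta> - (\<alpha> - 1) + 1"
      using count_nat_interval[of "\<alpha> - 1" \<beta>] pos by linarith
    then show ?thesis using L0 by (rule mult_left_mono)
  qed
  finally show ?thesis by (simp add: algebra_simps)
qed

lemma mu_one: "moebius_mu 1 = 1"
  by (simp add: moebius_mu_def)

lemma mu_mult_prime:
  assumes p: "prime p" and np: "\<not> p dvd e" and e: "e > 0"
  shows "moebius_mu (p * e) = - moebius_mu e"
proof -
  have cop: "coprime p e" using p np by (simp add: prime_imp_coprime)
  have sq: "squarefree (p * e) \<longleftrightarrow> squarefree e"
  proof
    assume "squarefree (p * e)" then show "squarefree e" using squarefree_mult_coprime squarefree_multD(2) by blast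
  next
    show "squarefree e \<Longrightarrow> squarefree (p * e)"
    proof -
      assume se: "squarefree e"
      have "squarefree p" using p prime_def squarefree_prime_elem by blast
      then show "squarefree (p * e)" using squarefree_mult_coprime[OF cop] se by blast
    qed
  qed
  have pf: "prime_factors (p * e) = insert p (prime_factors e)"
    using p e by (simp add: prime_factors_product prime_prime_factors)
  have "p \<notin> prime_factors e" using np by (auto simp: in_prime_factors_iff)
  then have "card (prime_factors (p * e)) = Suc (card (prime_factors e))" by (simp add: pf)
  then show ?thesis using p e sq by (simp add: moebius_mu_def)
qed

lemma mu_divisor_sum:
  fixes n :: nat
  assumes "n > 0"
  shows "(\<Sum>d\<in>{d. d dvd n}. moebius_mu d) = (if n = 1 then 1 else 0)"
proof (cases "n = 1")
  case True
  then have "{d. d dvd n} = {1}" by auto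
  then show ?thesis using True by (simp add: moebius_mu_def)
next
  case False
  obtain p where p: "prime p" "p dvd n" using prime_factor_nat[OF False] by blast
  define D where "D = {d. d dvd n}"
  define A where "A = {d\<in>D. \<not> p dvd d}"
  define R where "R = {d\<in>D. p dvd d}"
  have finD: "finite D" unfolding D_def using assms by simp
  have DAR: "D = A \<union> R" "A \<inter> R = {}" unfolding A_def R_def by auto
  have sD: "sum moebius_mu D = sum moebius_mu A + sum moebius_mu R"
    using finD DAR by (simp add: sum.union_disjoint)
  have pos: "d > 0" if "d \<in> D" for d using that assms unfolding D_def by (auto intro!: Nat.gr0I)
  have sR: "sum moebius_mu R = sum moebius_mu {d\<in>R. \<not> (p*p) dvd d}"
  proof (rule sum.mono_neutral_right)
    show "finite R" using finD unfolding R_def by simp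
    show "{d\<in>R. \<not> (p*p) dvd d} \<subseteq> R" by auto
    show "\<forall>i\<in>R - {d \<in> R. \<not> p * p dvd d}. moebius_mu i = 0"
    proof
      fix d assume "d \<in> R - {d \<in> R. \<not> p * p dvd d}"
      then have "(p*p) dvd d" "d > 0" using pos unfolding R_def by auto
      then have "\<not> squarefree d" using p unfolding squarefree_def
        by (metis not_prime_unit power2_eq_square)
      then show "moebius_mu d = 0" by (simp add: moebius_mu_def)
    qed
  qed
  have img: "{d\<in>R. \<not> (p*p) dvd d} = (\<lambda>e. p * e) ` A"
  proof
    show "{d\<in>R. \<not> (p*p) dvd d} \<subseteq> (\<lambda>e. p * e) ` A"
    proof
      fix d assume d: "d \<in> {d\<in>R. \<not> (p*p) dvd d}"
      then obtain e where e: "d = p * e" unfolding R_def by auto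
      have "e dvd n" using d e unfolding R_def D_def by (auto intro: dvd_mult_right)
      moreover have "\<not> p dvd e" using d e by auto
      ultimately show "d \<in> (\<lambda>e. p * e) ` A" using e unfolding A_def D_def by auto
    qed
  next
    show "(\<lambda>e. p * e) ` A \<subseteq> {d\<in>R. \<not> (p*p) dvd d}"
    proof
      fix d assume "d \<in> (\<lambda>e. p * e) ` A"
      then obtain e where e: "d = p * e" "e dvd n" "\<not> p dvd e" unfolding A_def D_def by auto
      have "coprime p e" using p e by (simp add: prime_imp_coprime)
      then have "p * e dvd n" using p e by (simp add: divides_mult)
      moreover have "\<not> (p*p) dvd (p*e)" using e p by (auto simp: prime_gt_0_nat)
      ultimately show "d \<in> {d\<in>R. \<not> (p*p) dvd d}" using e unfolding R_def D_def by auto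
    qed
  qed
  have inj: "inj_on (\<lambda>e. p * e) A" using p by (auto simp: inj_on_def prime_gt_0_nat)
  have "sum moebius_mu R = sum (\<lambda>e. moebius_mu (p * e)) A"
    using sR img sum.reindex[OF inj, of moebius_mu] by simp
  also have "\<dots> = sum (\<lambda>e. - moebius_mu e) A"
    by (rule sum.cong) (use p pos in \<open>auto simp: A_def intro!: mu_mult_prime\<close>)
  finally have "sum moebius_mu R = - sum moebius_mu A" by (simp add: sum_negf)
  then show ?thesis using sD False unfolding D_def by simp
qed

lemma sum_mult_index:
  fixes g :: "nat \<Rightarrow> real"
  assumes k: "k > 0" and z: "\<And>n. n > N \<Longrightarrow> g n = 0"
  shows "(\<Sum>a=1..N. g (k * a)) = (\<Sum>a\<in>{a\<in>{1..N}. k dvd a}. g a)"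
proof -
  have "(\<Sum>a=1..N. g (k * a)) = (\<Sum>a\<in>{a\<in>{1..N}. k * a \<le> N}. g (k * a))"
    by (rule sum.mono_neutral_right) (auto, metis z not_le)
  also have "\<dots> = (\<Sum>a\<in>(\<lambda>a. k * a) ` {a\<in>{1..N}. k * a \<le> N}. g a)"
    by (rule sum.reindex[symmetric, unfolded comp_def]) (use k in \<open>auto simp: inj_on_def\<close>)
  also have "(\<lambda>a. k * a) ` {a\<in>{1..N}. k * a \<le> N} = {a\<in>{1..N}. k dvd a}"
  proof
    show "(\<lambda>a. k * a) ` {a\<in>{1..N}. k * a \<le> N} \<subseteq> {a\<in>{1..N}. k dvd a}" using k by auto
    show "{a\<in>{1..N}. k dvd a} \<subseteq> (\<lambda>a. k * a) ` {a\<in>{1..N}. k * a \<le> N}"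
    proof
      fix a assume "a \<in> {a\<in>{1..N}. k dvd a}"
      then obtain b where b: "a = k * b" "1 \<le> a" "a \<le> N" by auto
      then have "b \<ge> 1" by (metis mult_0_right not_one_le_zero less_one not_le)
      moreover have "b \<le> a" using b k by simp
      ultimately have "b \<le> N" "1 \<le> b" using b(3) by linarith+
      then have "b \<in> {a\<in>{1..N}. k * a \<le> N}" using b by auto
      then show "a \<in> (\<lambda>a. k * a) ` {a\<in>{1..N}. k * a \<le> N}" using b(1) by blast
    qed
  qed
  finally show ?thesis .
qed

lemma coprime_mobius_sum:
  fixes \<Phi> :: "nat \<Rightarrow> nat \<Rightarrow> real" and N :: nat
  assumes z: "\<And>a c. a > N \<or> c > N \<Longrightarrow> \<Phi> a c = 0"
  shows "(\<Sum>a=1..N. \<Sum>c=1..N. if coprime a c then \<Phi> a c else 0)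
       = (\<Sum>k=1..N. moebius_mu k * (\<Sum>a=1..N. \<Sum>c=1..N. \<Phi> (k*a) (k*c)))"
proof -
  have step: "(\<Sum>a=1..N. \<Sum>c=1..N. \<Phi> (k*a) (k*c))
        = (\<Sum>a=1..N. \<Sum>c=1..N. if k dvd a \<and> k dvd c then \<Phi> a c else 0)" if k: "k \<ge> 1" for k
  proof -
    have "(\<Sum>a=1..N. \<Sum>c=1..N. \<Phi> (k*a) (k*c)) = (\<Sum>a=1..N. \<Sum>c\<in>{c\<in>{1..N}. k dvd c}. \<Phi> (k*a) c)"
      by (rule sum.cong[OF refl], rule sum_mult_index) (use k z in auto)
    also have "\<dots> = (\<Sum>a\<in>{a\<in>{1..N}. k dvd a}. \<Sum>c\<in>{c\<in>{1..N}. k dvd c}. \<Phi> a c)"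
      by (rule sum_mult_index[where g="\<lambda>a. \<Sum>c\<in>{c\<in>{1..N}. k dvd c}. \<Phi> a c"]) (use k z in auto)
    also have "\<dots> = (\<Sum>a\<in>{a\<in>{1..N}. k dvd a}. \<Sum>c=1..N. if k dvd c then \<Phi> a c else 0)"
      by (rule sum.cong[OF refl]) (rule sum.inter_filter, simp)
    also have "\<dots> = (\<Sum>a=1..N. if k dvd a then (\<Sum>c=1..N. if k dvd c then \<Phi> a c else 0) else 0)"
      by (rule sum.inter_filter) simp
    also have "\<dots> = (\<Sum>a=1..N. \<Sum>c=1..N. if k dvd a \<and> k dvd c then \<Phi> a c else 0)"
      by (rule sum.cong[OF refl]) auto
    finally show ?thesis .
  qed
  have inner: "(\<Sum>k=1..N. if k dvd a \<and> k dvd c then moebius_mu k else 0) = (if coprime a c then 1 else 0)"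
    if ac: "a \<in> {1..N}" "c \<in> {1..N}" for a c
  proof -
    have g0: "gcd a c > 0" using ac by simp
    have "(\<Sum>k=1..N. if k dvd a \<and> k dvd c then moebius_mu k else 0) = (\<Sum>k\<in>{k\<in>{1..N}. k dvd gcd a c}. moebius_mu k)"
      by (simp add: sum.inter_filter[symmetric] Int_def)
    also have "{k\<in>{1..N}. k dvd gcd a c} = {k. k dvd gcd a c}"
    proof (safe)
      fix k assume "k dvd gcd a c"
      then have "k dvd a" "k > 0" using ac by (auto intro: Nat.gr0I)
      then have "k \<le> a" using ac by (auto intro: dvd_imp_le)
      then show "k \<in> {1..N}" using ac \<open>k > 0\<close> by auto
    qed
    also have "(\<Sum>k\<in>{k. k dvd gcd a c}. moebius_mu k) = (if gcd a c = 1 then 1 else 0)"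
      by (rule mu_divisor_sum[OF g0])
    finally show ?thesis by (simp add: coprime_iff_gcd_eq_1)
  qed
  have "(\<Sum>k=1..N. moebius_mu k * (\<Sum>a=1..N. \<Sum>c=1..N. \<Phi> (k*a) (k*c)))
      = (\<Sum>k=1..N. \<Sum>a=1..N. \<Sum>c=1..N. (if k dvd a \<and> k dvd c then moebius_mu k else 0) * \<Phi> a c)"
  proof (rule sum.cong[OF refl])
    fix k assume "k \<in> {1..N}"
    then have k1: "k \<ge> 1" by simp
    have "moebius_mu k * (\<Sum>a=1..N. \<Sum>c=1..N. \<Phi> (k*a) (k*c))
        = moebius_mu k * (\<Sum>a=1..N. \<Sum>c=1..N. if k dvd a \<and> k dvd c then \<Phi> a c else 0)"
      by (simp only: step[OF k1])
    also have "\<dots> = (\<Sum>a=1..N. \<Sum>c=1..N. (if k dvd a \<and> k dvd c then moebius_mu k else 0) * \<Phi> a c)"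
      unfolding sum_distrib_left by (intro sum.cong refl) auto
    finally show "moebius_mu k * (\<Sum>a=1..N. \<Sum>c=1..N. \<Phi> (k*a) (k*c))
        = (\<Sum>a=1..N. \<Sum>c=1..N. (if k dvd a \<and> k dvd c then moebius_mu k else 0) * \<Phi> a c)" .
  qed
  also have "\<dots> = (\<Sum>a=1..N. \<Sum>c=1..N. \<Sum>k=1..N. (if k dvd a \<and> k dvd c then moebius_mu k else 0) * \<Phi> a c)"
    by (subst sum.swap) (rule sum.cong[OF refl], rule sum.swap)
  also have "\<dots> = (\<Sum>a=1..N. \<Sum>c=1..N. if coprime a c then \<Phi> a c else 0)"
  proof (intro sum.cong refl)
    fix a c assume ac: "a \<in> {1..N}" "c \<in> {1..N}"
    have "(\<Sum>k=1..N. (if k dvd a \<and> k dvd c then moebius_mu k else 0) * \<Phi> a c)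
        = (\<Sum>k=1..N. (if k dvd a \<and> k dvd c then moebius_mu k else 0)) * \<Phi> a c"
      by (simp add: sum_distrib_right)
    also have "\<dots> = (if coprime a c then \<Phi> a c else 0)" using inner[OF ac] by simp
    finally show "(\<Sum>k=1..N. (if k dvd a \<and> k dvd c then moebius_mu k else 0) * \<Phi> a c)
        = (if coprime a c then \<Phi> a c else 0)" .
  qed
  finally show ?thesis by simp
qed

lemma prod_diff_bound:
  fixes u v u' v' :: real
  shows "\<bar>u * v - u' * v'\<bar> \<le> \<bar>u - u'\<bar> * \<bar>v\<bar> + \<bar>u'\<bar> * \<bar>v - v'\<bar>"
proof -
  have "u * v - u' * v' = (u - u') * v + u' * (v - v')" by algebra
  then show ?thesis by (metis abs_mult abs_triangle_ineq)
qed

lemma prod_diff_bound2: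
  fixes u v u' v' :: real
  assumes "\<bar>u - u'\<bar> \<le> Du" "\<bar>v\<bar> \<le> Bv" "\<bar>u'\<bar> \<le> Bu" "\<bar>v - v'\<bar> \<le> Dv"
  shows "\<bar>u * v - u' * v'\<bar> \<le> Du * Bv + Bu * Dv"
proof -
  have "\<bar>u - u'\<bar> * \<bar>v\<bar> \<le> Du * Bv" using assms by (intro mult_mono) auto
  moreover have "\<bar>u'\<bar> * \<bar>v - v'\<bar> \<le> Bu * Dv" using assms by (intro mult_mono) auto
  ultimately show ?thesis using prod_diff_bound[of u v u' v'] by linarith
qed

lemma abs_mult_diff: fixes w u v :: real shows "\<bar>w * u - w * v\<bar> = \<bar>w\<bar> * \<bar>u - v\<bar>"
  by (simp add: right_diff_distrib[symmetric] abs_mult)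

locale PS =
  fixes V :: "real \<Rightarrow> real" and A X l r1 :: real
  assumes Vsupp: "\<And>t. t \<notin> {1..2} \<Longrightarrow> V t = 0"
    and Vbd: "\<And>t. \<bar>V t\<bar> \<le> A" and Vlip: "\<And>s t. \<bar>V s - V t\<bar> \<le> A * \<bar>s - t\<bar>"
    and A1: "1 \<le> A" and X2: "2 \<le> X" and l1: "1 \<le> l" and r1b: "\<bar>r1\<bar> \<le> 3 * X^2 / l"
begin

definition m :: "real \<Rightarrow> real" where "m a = max a (X / l)"
definition Psi :: "real \<Rightarrow> real \<Rightarrow> real \<Rightarrow> real" where
  "Psi a c x = V (l * a / X) * V (l * c / X) * V (x / X) * V ((r1 + x * c) / (m a * X)) / m a"

lemma Xpos: "0 < X" using X2 by simp
lemma lpos: "0 < l" using l1 by simp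
lemma Xlpos: "0 < X / l" using Xpos lpos by simp
lemma m_ge: "X / l \<le> m a" unfolding m_def by simp
lemma m_pos: "0 < m a" using m_ge Xlpos by (meson less_le_trans)
lemma m_eq: "X / l \<le> a \<Longrightarrow> m a = a" unfolding m_def by simp

lemma Vnz: "V t \<noteq> 0 \<Longrightarrow> 1 \<le> t \<and> t \<le> 2" using Vsupp by force

lemma Vcont: "continuous_on UNIV V" by (rule lip_continuous[OF Vlip])

lemma Vcont_intro[continuous_intros]: "continuous_on S f \<Longrightarrow> continuous_on S (\<lambda>x. V (f x))"
  using continuous_on_compose2[OF Vcont, of S f] by simp

lemma m_cont[continuous_intros]: "continuous_on S f \<Longrightarrow> continuous_on S (\<lambda>x. m (f x))"
  unfolding m_def by (intro continuous_intros)

lemma Psi_cont[continuous_intros]: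
  assumes "continuous_on S fa" "continuous_on S fc" "continuous_on S fx"
  shows "continuous_on S (\<lambda>p. Psi (fa p) (fc p) (fx p))"
  unfolding Psi_def using m_pos Xpos by (intro continuous_intros assms) (auto simp: less_imp_neq[symmetric])

lemma range_of: 
  assumes "V (l * a / X) \<noteq> 0" shows "X / l \<le> a" "a \<le> 2 * X / l"
proof -
  have "1 \<le> l * a / X" "l * a / X \<le> 2" using Vnz[OF assms] by auto
  then show "X / l \<le> a" "a \<le> 2 * X / l" using Xpos lpos by (auto simp: field_simps)
qed

lemma rangex: assumes "V (x / X) \<noteq> 0" shows "X \<le> x" "x \<le> 2 * X"
proof -
  have "1 \<le> x / X" "x / X \<le> 2" using Vnz[OF assms] by auto
  then show "X \<le> x" "x \<le> 2 * X" using Xpos by (auto simp: field_simps)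
qed

lemma Psi_nz:
  assumes "Psi a c x \<noteq> 0"
  shows "X / l \<le> a" "a \<le> 2 * X / l" "X / l \<le> c" "c \<le> 2 * X / l" "X \<le> x" "x \<le> 2 * X"
proof -
  have "V (l * a / X) \<noteq> 0" "V (l * c / X) \<noteq> 0" "V (x / X) \<noteq> 0" using assms unfolding Psi_def by auto
  then show "X / l \<le> a" "a \<le> 2 * X / l" "X / l \<le> c" "c \<le> 2 * X / l" "X \<le> x" "x \<le> 2 * X"
    using range_of rangex by auto
qed

lemma V4: "\<bar>V a * V b * V c * V d\<bar> \<le> A^4"
proof -
  have "\<bar>V a * V b * V c * V d\<bar> = \<bar>V a\<bar> * \<bar>V b\<bar> * \<bar>V c\<bar> * \<bar>V d\<bar>" by (simp add: abs_mult)
  also have "\<dots> \<le> A * A * A * A" using Vbd A1 by (intro mult_mono) auto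
  finally show ?thesis by (simp add: power4_eq_xxxx)
qed

lemma inv_m_bd: "\<bar>1 / m a\<bar> \<le> l / X"
proof -
  have "1 / m a \<le> 1 / (X / l)" by (rule divide_left_mono) (use m_ge Xlpos m_pos[of a] lpos Xpos in \<open>auto simp: zero_less_mult_iff zero_less_divide_iff\<close>)
  then show ?thesis using m_pos[of a] by simp
qed

lemma Psi_bd: "\<bar>Psi a c x\<bar> \<le> A^4 * (l / X)"
proof -
  have "Psi a c x = (V (l * a / X) * V (l * c / X) * V (x / X) * V ((r1 + x * c) / (m a * X))) * (1 / m a)"
    unfolding Psi_def by simp
  also have "\<bar>\<dots>\<bar> = \<bar>V (l * a / X) * V (l * c / X) * V (x / X) * V ((r1 + x * c) / (m a * X))\<bar> * \<bar>1 / m a\<bar>"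
    by (rule abs_mult)
  also have "\<dots> \<le> A^4 * (l / X)"
    using V4 inv_m_bd by (intro mult_mono) auto
  finally show ?thesis .
qed


lemma q_pos: "0 < l / X" using Xpos lpos by simp

lemma inv_m_lip:
  assumes k: "0 \<le> k"
  shows "\<bar>1 / m (k*a) - 1 / m (k*a')\<bar> \<le> k * (l/X)^2 * \<bar>a - a'\<bar>"
proof -
  have d: "\<bar>m (k*a) - m (k*a')\<bar> \<le> k * \<bar>a - a'\<bar>"
  proof -
    have "\<bar>m (k*a) - m (k*a')\<bar> \<le> \<bar>k*a - k*a'\<bar>" unfolding m_def by (auto simp: max_def)
    also have "\<bar>k*a - k*a'\<bar> = k * \<bar>a - a'\<bar>" using k by (simp add: right_diff_distrib[symmetric] abs_mult)
    finally show ?thesis .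
  qed
  have eq: "1 / m (k*a) - 1 / m (k*a') = (m (k*a') - m (k*a)) / (m (k*a) * m (k*a'))"
    using m_pos[of "k*a"] m_pos[of "k*a'"] by (simp add: field_simps)
  have w: "(X/l) * (X/l) \<le> m (k*a) * m (k*a')" using m_ge Xlpos m_pos by (intro mult_mono) (auto intro: less_imp_le)
  have "\<bar>1 / m (k*a) - 1 / m (k*a')\<bar> = \<bar>m (k*a') - m (k*a)\<bar> / (m (k*a) * m (k*a'))"
    unfolding eq using m_pos[of "k*a"] m_pos[of "k*a'"] by (simp add: abs_div)
  also have "\<dots> \<le> (k * \<bar>a - a'\<bar>) / ((X/l) * (X/l))"
    using d w Xlpos k mult_pos_pos[OF Xlpos Xlpos] by (intro frac_le) (auto simp: abs_minus_commute)
  also have "\<dots> = k * (l/X)^2 * \<bar>a - a'\<bar>" using Xpos lpos by (simp add: field_simps power2_eq_square)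
  finally show ?thesis .
qed

lemma Vlip_scaled: "\<bar>V (s * u) - V (s * v)\<bar> \<le> A * \<bar>s\<bar> * \<bar>u - v\<bar>"
proof -
  have "\<bar>V (s * u) - V (s * v)\<bar> \<le> A * \<bar>s * u - s * v\<bar>" by (rule Vlip)
  also have "\<bar>s * u - s * v\<bar> = \<bar>s\<bar> * \<bar>u - v\<bar>" by (simp add: right_diff_distrib[symmetric] abs_mult)
  finally show ?thesis by (simp add: mult.assoc)
qed

lemma Psi_lip_a:
  assumes k: "0 < k"
  shows "\<bar>Psi (k*a) (k*c) x - Psi (k*a') (k*c) x\<bar> \<le> 9 * A^4 * k * (l/X)^2 * \<bar>a - a'\<bar>"
proof (cases "V (l*(k*c)/X) * V (x/X) = 0")
  case True
  then have "Psi (k*a) (k*c) x = 0" "Psi (k*a') (k*c) x = 0" unfolding Psi_def by auto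
  moreover have "0 \<le> 9 * A^4 * k * (l/X)^2 * \<bar>a - a'\<bar>" using k A1 by simp
  ultimately show ?thesis by simp
next
  case False
  define q where "q = l / X"
  have q: "0 < q" unfolding q_def using q_pos .
  have c1: "X/l \<le> k*c" "k*c \<le> 2*X/l" using False range_of[of "k*c"] by auto
  have x1: "X \<le> x" "x \<le> 2*X" using False rangex[of x] by auto
  define p where "p = (r1 + x*(k*c))/X"
  have pb: "\<bar>p\<bar> \<le> 7 / q"
  proof -
    have "x*(k*c) \<le> (2*X)*(2*X/l)" using x1 c1 Xpos Xlpos by (intro mult_mono) auto
    moreover have "0 \<le> x*(k*c)" using x1 c1 Xpos Xlpos by auto
    ultimately have "\<bar>r1 + x*(k*c)\<bar> \<le> 3 * X^2 / l + (2*X)*(2*X/l)" using r1b by linarith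
    also have "\<dots> = 7 * X^2 / l" by (simp add: power2_eq_square field_simps)
    finally have "\<bar>r1 + x*(k*c)\<bar> / X \<le> 7 * X^2 / l / X" by (rule divide_right_mono) (use Xpos in auto)
    then show ?thesis unfolding p_def q_def using Xpos lpos by (simp add: abs_div power2_eq_square field_simps)
  qed
  define K where "K = V (l*(k*c)/X) * V (x/X)"
  define u1 where "u1 b = V ((l*k/X) * b)" for b
  define u2 where "u2 b = 1 / m (k*b)" for b
  define u3 where "u3 b = V (p * u2 b)" for b
  have eq: "Psi (k*b) (k*c) x = K * (u1 b * (u3 b * u2 b))" for b
  proof -
    have a1: "l*(k*b)/X = (l*k/X)*b" by simp
    have a2: "(r1 + x*(k*c))/(m (k*b)*X) = p * (1 / m (k*b))" unfolding p_def by simp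
    show ?thesis unfolding Psi_def K_def u1_def u2_def u3_def a1 a2 by (simp add: mult_ac divide_inverse)
  qed
  define d where "d = \<bar>a - a'\<bar>"
  have d0: "0 \<le> d" unfolding d_def by simp
  have b1: "\<bar>u1 a - u1 a'\<bar> \<le> A * (k*q) * d"
    unfolding u1_def d_def q_def using Vlip_scaled[of "l*k/X" a a'] k lpos Xpos by (simp add: abs_mult mult_ac)
  have b2: "\<bar>u2 a - u2 a'\<bar> \<le> k * q^2 * d" unfolding u2_def d_def q_def using inv_m_lip[of k a a'] k by simp
  have b2b: "\<bar>u2 b\<bar> \<le> q" for b unfolding u2_def q_def by (rule inv_m_bd)
  have b3: "\<bar>u3 a - u3 a'\<bar> \<le> 7 * A * k * q * d"
  proof -
    have "\<bar>u3 a - u3 a'\<bar> \<le> A * \<bar>p\<bar> * \<bar>u2 a - u2 a'\<bar>" unfolding u3_def by (rule Vlip_scaled)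
    also have "\<dots> \<le> A * (7 / q) * (k * q^2 * d)" using A1 pb b2 q by (intro mult_mono) auto
    also have "\<dots> = 7 * A * k * q * d" using q by (simp add: power2_eq_square field_simps)
    finally show ?thesis .
  qed
  have b3b: "\<bar>u3 b\<bar> \<le> A" for b unfolding u3_def by (rule Vbd)
  have b1b: "\<bar>u1 b\<bar> \<le> A" for b unfolding u1_def by (rule Vbd)
  have b23: "\<bar>u3 a * u2 a - u3 a' * u2 a'\<bar> \<le> (7 * A * k * q * d) * q + A * (k * q^2 * d)"
    by (rule prod_diff_bound2[OF b3 b2b b3b b2])
  have b23b: "\<bar>u3 a * u2 a\<bar> \<le> A * q" using b3b b2b A1 q by (simp add: abs_mult mult_mono)
  have b123: "\<bar>u1 a * (u3 a * u2 a) - u1 a' * (u3 a' * u2 a')\<bar>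
      \<le> (A * (k*q) * d) * (A * q) + A * ((7 * A * k * q * d) * q + A * (k * q^2 * d))"
    by (rule prod_diff_bound2[OF b1 b23b b1b b23])
  also have "\<dots> = 9 * A^2 * k * q^2 * d" by (simp add: power2_eq_square algebra_simps)
  finally have b123': "\<bar>u1 a * (u3 a * u2 a) - u1 a' * (u3 a' * u2 a')\<bar> \<le> 9 * A^2 * k * q^2 * d" .
  have Kb: "\<bar>K\<bar> \<le> A^2" unfolding K_def abs_mult power2_eq_square using Vbd A1 by (intro mult_mono) auto
  have "\<bar>Psi (k*a) (k*c) x - Psi (k*a') (k*c) x\<bar> = \<bar>K\<bar> * \<bar>u1 a * (u3 a * u2 a) - u1 a' * (u3 a' * u2 a')\<bar>"
    unfolding eq by (simp add: right_diff_distrib[symmetric] abs_mult)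
  also have "\<dots> \<le> A^2 * (9 * A^2 * k * q^2 * d)" using Kb b123' by (intro mult_mono) auto
  also have "\<dots> = 9 * A^4 * k * (l/X)^2 * \<bar>a - a'\<bar>" unfolding q_def d_def by (simp add: power4_eq_xxxx power2_eq_square)
  finally show ?thesis .
qed

lemma Psi_lip_c:
  assumes k: "0 < k"
  shows "\<bar>Psi (k*z) (k*c) x - Psi (k*z) (k*c') x\<bar> \<le> 3 * A^4 * k * (l/X)^2 * \<bar>c - c'\<bar> * indicator {X/(l*k)..2*X/(l*k)} z"
proof (cases "V (l*(k*z)/X) * V (x/X) = 0")
  case True
  then have "Psi (k*z) (k*c) x = 0" "Psi (k*z) (k*c') x = 0" unfolding Psi_def by auto
  moreover have "0 \<le> 3 * A^4 * k * (l/X)^2 * \<bar>c - c'\<bar> * indicator {X/(l*k)..2*X/(l*k)} z" using k A1 by simp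
  ultimately show ?thesis by simp
next
  case False
  define q where "q = l / X"
  have q: "0 < q" unfolding q_def using q_pos .
  have z1: "X/l \<le> k*z" "k*z \<le> 2*X/l" using False range_of[of "k*z"] by auto
  have zin: "z \<in> {X/(l*k)..2*X/(l*k)}" using z1 k lpos by (auto simp: field_simps)
  have x1: "X \<le> x" "x \<le> 2*X" using False rangex[of x] by auto
  have mz: "m (k*z) = k*z" using m_eq z1 by simp
  define K where "K = V (l*(k*z)/X) * V (x/X) / m (k*z)"
  define v1 where "v1 b = V ((l*k/X) * b)" for b
  define v2 where "v2 b = V (r1 / (m (k*z) * X) + (x*k/(m (k*z) * X)) * b)" for b
  have eq: "Psi (k*z) (k*b) x = K * (v1 b * v2 b)" for b
  proof -
    have a1: "l*(k*b)/X = (l*k/X)*b" by simp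
    have a2: "(r1 + x*(k*b))/(m (k*z)*X) = r1 / (m (k*z) * X) + (x*k/(m (k*z) * X)) * b"
      by (simp add: add_divide_distrib)
    show ?thesis unfolding Psi_def K_def v1_def v2_def a1 a2 by (simp add: mult_ac divide_inverse)
  qed
  define d where "d = \<bar>c - c'\<bar>"
  have b1: "\<bar>v1 c - v1 c'\<bar> \<le> A * (k*q) * d"
    unfolding v1_def d_def q_def using Vlip_scaled[of "l*k/X" c c'] k lpos Xpos by (simp add: abs_mult mult_ac)
  have cf: "\<bar>x*k/(m (k*z) * X)\<bar> \<le> 2 * k * q"
  proof -
    have "\<bar>x*k/(m (k*z) * X)\<bar> = x*k/(m (k*z) * X)" using x1 k Xpos m_pos[of "k*z"] by simp
    also have "\<dots> \<le> (2*X)*k/((X/l) * X)" using x1 k Xpos m_ge[of "k*z"] Xlpos mult_pos_pos[OF Xlpos Xpos]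
      by (intro frac_le mult_mono) auto
    also have "\<dots> = 2 * k * q" unfolding q_def using Xpos lpos by (simp add: field_simps)
    finally show ?thesis .
  qed
  have b2: "\<bar>v2 c - v2 c'\<bar> \<le> A * (2*k*q) * d"
  proof -
    have "\<bar>v2 c - v2 c'\<bar> \<le> A * \<bar>(x*k/(m (k*z) * X)) * c - (x*k/(m (k*z) * X)) * c'\<bar>"
      unfolding v2_def using Vlip[of "r1 / (m (k*z) * X) + (x*k/(m (k*z) * X)) * c" "r1 / (m (k*z) * X) + (x*k/(m (k*z) * X)) * c'"] by simp
    also have "\<bar>(x*k/(m (k*z) * X)) * c - (x*k/(m (k*z) * X)) * c'\<bar> = \<bar>x*k/(m (k*z) * X)\<bar> * d"
      unfolding d_def by (rule abs_mult_diff)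
    also have "A * (\<bar>x*k/(m (k*z) * X)\<bar> * d) \<le> A * (2*k*q * d)"
      using cf A1 unfolding d_def by (intro mult_left_mono mult_right_mono) auto
    finally show ?thesis by (simp add: mult.assoc)
  qed
  have b1b: "\<bar>v1 b\<bar> \<le> A" for b unfolding v1_def by (rule Vbd)
  have b2b: "\<bar>v2 b\<bar> \<le> A" for b unfolding v2_def by (rule Vbd)
  have b12: "\<bar>v1 c * v2 c - v1 c' * v2 c'\<bar> \<le> (A * (k*q) * d) * A + A * (A * (2*k*q) * d)"
    by (rule prod_diff_bound2[OF b1 b2b b1b b2])
  have Kb: "\<bar>K\<bar> \<le> A^2 * q"
  proof -
    have "\<bar>K\<bar> = \<bar>V (l*(k*z)/X) * V (x/X)\<bar> * \<bar>1 / m (k*z)\<bar>" unfolding K_def by (simp add: abs_mult)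
    also have "\<dots> \<le> (A * A) * q" unfolding q_def abs_mult using Vbd A1 inv_m_bd by (intro mult_mono) auto
    finally show ?thesis by (simp add: power2_eq_square)
  qed
  have "\<bar>Psi (k*z) (k*c) x - Psi (k*z) (k*c') x\<bar> = \<bar>K\<bar> * \<bar>v1 c * v2 c - v1 c' * v2 c'\<bar>"
    unfolding eq by (simp add: right_diff_distrib[symmetric] abs_mult)
  also have "\<dots> \<le> (A^2 * q) * ((A * (k*q) * d) * A + A * (A * (2*k*q) * d))"
    using Kb b12 by (intro mult_mono) auto
  also have "\<dots> = 3 * A^4 * k * (l/X)^2 * \<bar>c - c'\<bar> * indicator {X/(l*k)..2*X/(l*k)} z"
    using zin unfolding q_def d_def by (simp add: power4_eq_xxxx power2_eq_square algebra_simps)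
  finally show ?thesis .
qed

end

lemma aux_lin: fixes t :: real shows "1 \<le> 2*t \<Longrightarrow> t + 1 \<le> 3*t" "1 \<le> 2*t \<Longrightarrow> t + 2 \<le> 5*t" by linarith+

context PS begin

lemma Psi_zero_big:
  fixes kr :: real and n N :: nat
  assumes k1: "1 \<le> kr" and N: "N = nat \<lfloor>2*X/l\<rfloor>" and n: "n > N"
  shows "Psi (kr * real n) c x = 0" "Psi a (kr * real n) x = 0"
proof -
  have "2*X/l < real N + 1" unfolding N using Xlpos by linarith
  also have "real N + 1 \<le> real n" using n by simp
  also have "real n \<le> kr * real n" using k1 mult_right_mono[of 1 kr "real n"] by simp
  finally have big: "2*X/l < kr * real n" .
  show "Psi (kr * real n) c x = 0" using Psi_nz(2)[of "kr * real n" c x] big by auto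
  show "Psi a (kr * real n) x = 0" using Psi_nz(4)[of a "kr * real n" x] big by auto
qed

lemma Psi_int_z:
  assumes "0 < kr"
  shows "integrable lborel (\<lambda>z. Psi (kr*z) c x)"
proof (rule cont_compact_integrable[of _ "{X/(l*kr)..2*X/(l*kr)}"])
  show "continuous_on UNIV (\<lambda>z. Psi (kr*z) c x)" by (intro continuous_intros)
  show "compact {X/(l*kr)..2*X/(l*kr)}" by simp
  fix z assume "z \<notin> {X/(l*kr)..2*X/(l*kr)}"
  then show "Psi (kr*z) c x = 0" using Psi_nz(1,2)[of "kr*z" c x] assms lpos
    by (auto simp: field_simps)
qed

lemma Psi_int_x:
  shows "integrable lborel (\<lambda>x. Psi a c x)"
proof (rule cont_compact_integrable[of _ "{X..2*X}"])
  show "continuous_on UNIV (\<lambda>x. Psi a c x)" by (intro continuous_intros)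
  show "compact {X..2*X}" by simp
  fix x assume "x \<notin> {X..2*X}"
  then show "Psi a c x = 0" using Psi_nz(5,6)[of a c x] by auto
qed

lemma lattice_x:
  fixes k N :: nat and x :: real
  assumes k1: "1 \<le> k" and kb: "real k \<le> 2*X/l" and N: "N = nat \<lfloor>2*X/l\<rfloor>"
  shows "\<bar>(\<Sum>a=1..N. \<Sum>c=1..N. Psi (real k * real a) (real k * real c) x)
          - (\<integral>y. (\<integral>z. Psi (real k * z) (real k * y) x \<partial>lborel) \<partial>lborel)\<bar>
         \<le> 150 * A^4 / real k * indicator {X..2*X} x"
proof (cases "x \<in> {X..2*X}")
  case False
  then have z: "Psi a c x = 0" for a c using Psi_nz(5,6)[of a c x] by auto
  show ?thesis using False by (simp add: z)
next
  case True
  define kr where "kr = real k"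
  have kr1: "1 \<le> kr" and kr0: "0 < kr" using k1 unfolding kr_def by auto
  define \<alpha> where "\<alpha> = X/(l*kr)"
  define \<beta> where "\<beta> = 2*X/(l*kr)"
  have \<alpha>0: "0 < \<alpha>" unfolding \<alpha>_def using Xpos lpos kr0 by simp
  have \<alpha>\<beta>: "\<alpha> \<le> \<beta>" unfolding \<alpha>_def \<beta>_def using Xpos lpos kr0 by (simp add: divide_right_mono)
  have ba: "\<beta> - \<alpha> = X/(l*kr)" unfolding \<alpha>_def \<beta>_def by (simp add: field_simps)
  have kq: "kr * (l/X) \<le> 2" using kb Xpos lpos unfolding kr_def by (simp add: field_simps)
  have one_le0: "1 \<le> 2*X/(l*kr)" using kq Xpos lpos kr0 by (simp add: field_simps)
  have one_le: "1 \<le> 2*(X/(l*kr))" using one_le0 by simp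
  have c45: "0 \<le> 45 * A^4 * (l/X)" and c3: "0 \<le> 3 * A^4 * (l/X)" using A1 Xpos lpos by auto
  have suppr: "Psi (kr*a) (kr*c) x = 0" if "a \<notin> {\<alpha>..\<beta>} \<or> c \<notin> {\<alpha>..\<beta>}" for a c
  proof (rule ccontr)
    assume "Psi (kr*a) (kr*c) x \<noteq> 0"
    from Psi_nz[OF this] have "a \<in> {\<alpha>..\<beta>}" "c \<in> {\<alpha>..\<beta>}" unfolding \<alpha>_def \<beta>_def
      using kr0 lpos by (auto simp: field_simps)
    then show False using that by auto
  qed
  define g where "g c a = Psi (kr*a) (kr*c) x" for c a
  define h where "h c = (\<integral>z. g c z \<partial>lborel)" for c
  have gbig: "g c (real n) = 0" "g (real n) a = 0" if "n > N" for n c a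
    unfolding g_def using Psi_zero_big[OF kr1 N that] by (simp_all add: mult.commute)
  have e1: "\<bar>(\<Sum>a=1..N. g c (real a)) - h c\<bar> \<le> (if \<alpha> \<le> c \<and> c \<le> \<beta> then 45 * A^4 * (l/X) else 0)" for c
  proof (cases "\<alpha> \<le> c \<and> c \<le> \<beta>")
    case True
    have "\<bar>(\<Sum>a=1..N. g c (real a)) - h c\<bar> \<le> (9 * A^4 * kr * (l/X)^2) * (\<beta> - \<alpha> + 2)"
      unfolding h_def
    proof (rule lattice1[OF _ _ \<alpha>0 \<alpha>\<beta>])
      show "\<bar>g c s - g c t\<bar> \<le> 9 * A^4 * kr * (l/X)^2 * \<bar>s - t\<bar>" for s t
        unfolding g_def by (rule Psi_lip_a[OF kr0])
      show "g c t = 0" if "t \<notin> {\<alpha>..\<beta>}" for t unfolding g_def using suppr that by auto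
      show "g c (real n) = 0" if "N < n" for n using gbig that by auto
    qed
    also have "\<dots> = 9 * A^4 * (l/X) + 18 * A^4 * (l/X) * (kr * (l/X))"
      unfolding ba using Xpos lpos kr0 by (simp add: field_simps power2_eq_square)
    also have "\<dots> \<le> 9 * A^4 * (l/X) + 18 * A^4 * (l/X) * 2"
      using kq A1 q_pos Xpos lpos by (intro add_left_mono mult_left_mono) auto
    finally show ?thesis using True by (simp add: mult_ac)
  next
    case False
    then have "g c a = 0" for a unfolding g_def using suppr by auto
    then have gz: "g c = (\<lambda>_. 0)" by (simp add: fun_eq_iff)
    then show ?thesis using False unfolding h_def gz by auto
  qed
  have e2: "\<bar>\<Sum>c=1..N. ((\<Sum>a=1..N. g (real c) (real a)) - h (real c))\<bar> \<le> 135 * A^4 / kr"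
  proof -
    have "\<bar>\<Sum>c=1..N. ((\<Sum>a=1..N. g (real c) (real a)) - h (real c))\<bar>
        \<le> (\<Sum>c=1..N. \<bar>(\<Sum>a=1..N. g (real c) (real a)) - h (real c)\<bar>)" by (rule sum_abs)
    also have "\<dots> \<le> (\<Sum>c=1..N. (if \<alpha> \<le> real c \<and> real c \<le> \<beta> then 45 * A^4 * (l/X) else 0))"
      by (rule sum_mono) (rule e1)
    also have "\<dots> = 45 * A^4 * (l/X) * real (card {c\<in>{1..N}. \<alpha> \<le> real c \<and> real c \<le> \<beta>})"
      by (simp add: sum.If_cases Int_def)
    also have "\<dots> \<le> 45 * A^4 * (l/X) * (\<beta> - \<alpha> + 1)"
    proof -
      have fin: "finite {c::nat. \<alpha> \<le> real c \<and> real c \<le> \<beta>}"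
      proof (rule finite_subset[of _ "{..nat \<lceil>\<beta>\<rceil>}"])
        show "{c::nat. \<alpha> \<le> real c \<and> real c \<le> \<beta>} \<subseteq> {..nat \<lceil>\<beta>\<rceil>}"
        proof
          fix c assume "c \<in> {c::nat. \<alpha> \<le> real c \<and> real c \<le> \<beta>}"
          then have "real c \<le> \<beta>" by simp
          then have "real c \<le> real (nat \<lceil>\<beta>\<rceil>)" using real_nat_ceiling_ge[of \<beta>] by (rule order_trans)
          then show "c \<in> {..nat \<lceil>\<beta>\<rceil>}" by simp
        qed
      qed simp
      have "card {c\<in>{1..N}. \<alpha> \<le> real c \<and> real c \<le> \<beta>} \<le> card {c::nat. \<alpha> \<le> real c \<and> real c \<le> \<beta>}"
        by (rule card_mono[OF fin]) auto
      then have "real (card {c\<in>{1..N}. \<alpha> \<le> real c \<and> real c \<le> \<beta>}) \<le> \<beta> - \<alpha> + 1"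
        using count_nat_interval[of \<alpha> \<beta>] \<alpha>\<beta> by linarith
      then show ?thesis using A1 q_pos Xpos lpos by (intro mult_left_mono) auto
    qed
    also have "\<dots> \<le> 45 * A^4 * (l/X) * (3 * (X/(l*kr)))"
      unfolding ba by (rule mult_left_mono[OF _ c45]) (rule aux_lin(1)[OF one_le])
    also have "\<dots> = 135 * A^4 / kr" using Xpos lpos kr0 by (simp add: field_simps)
    finally show ?thesis .
  qed
  have hlip: "\<bar>h s - h t\<bar> \<le> 3 * A^4 * (l/X) * \<bar>s - t\<bar>" for s t
  proof -
    have "h s - h t = (\<integral>z. (g s z - g t z) \<partial>lborel)"
      unfolding h_def g_def using Psi_int_z[OF kr0] by simp
    also have "\<bar>\<dots>\<bar> \<le> (3 * A^4 * kr * (l/X)^2 * \<bar>s - t\<bar>) * (\<beta> - \<alpha>)"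
    proof (rule int_bound_interval[OF _ \<alpha>\<beta>])
      fix z show "\<bar>g s z - g t z\<bar> \<le> 3 * A^4 * kr * (l/X)^2 * \<bar>s - t\<bar> * indicator {\<alpha>..\<beta>} z"
        unfolding g_def \<alpha>_def \<beta>_def by (rule Psi_lip_c[OF kr0])
    qed
    also have "\<dots> = 3 * A^4 * (l/X) * \<bar>s - t\<bar>"
      unfolding ba using Xpos lpos kr0 by (simp add: field_simps power2_eq_square)
    finally show ?thesis .
  qed
  have e3: "\<bar>(\<Sum>c=1..N. h (real c)) - (\<integral>y. h y \<partial>lborel)\<bar> \<le> 15 * A^4 / kr"
  proof -
    have "\<bar>(\<Sum>c=1..N. h (real c)) - (\<integral>y. h y \<partial>lborel)\<bar> \<le> (3 * A^4 * (l/X)) * (\<beta> - \<alpha> + 2)"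
    proof (rule lattice1[OF hlip _ \<alpha>0 \<alpha>\<beta>])
      show "h t = 0" if "t \<notin> {\<alpha>..\<beta>}" for t
      proof -
        have "g t z = 0" for z unfolding g_def using suppr that by auto
        then have gz: "g t = (\<lambda>_. 0)" by (simp add: fun_eq_iff)
        then show ?thesis unfolding h_def gz by simp
      qed
      show "h (real n) = 0" if "N < n" for n
      proof -
        have "g (real n) = (\<lambda>_. 0)" using gbig(2)[OF that] by (simp add: fun_eq_iff)
        then show ?thesis unfolding h_def by simp
      qed
    qed
    also have "\<dots> \<le> (3 * A^4 * (l/X)) * (5 * (X/(l*kr)))"
      unfolding ba by (rule mult_left_mono[OF _ c3]) (rule aux_lin(2)[OF one_le])
    also have "\<dots> = 15 * A^4 / kr" using Xpos lpos kr0 by (simp add: field_simps)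
    finally show ?thesis .
  qed
  have "(\<Sum>a=1..N. \<Sum>c=1..N. Psi (real k * real a) (real k * real c) x) = (\<Sum>c=1..N. \<Sum>a=1..N. g (real c) (real a))"
    unfolding g_def kr_def by (rule sum.swap)
  moreover have "(\<integral>y. (\<integral>z. Psi (real k * z) (real k * y) x \<partial>lborel) \<partial>lborel) = (\<integral>y. h y \<partial>lborel)"
    unfolding h_def g_def kr_def ..
  ultimately have "\<bar>(\<Sum>a=1..N. \<Sum>c=1..N. Psi (real k * real a) (real k * real c) x)
          - (\<integral>y. (\<integral>z. Psi (real k * z) (real k * y) x \<partial>lborel) \<partial>lborel)\<bar>
      = \<bar>(\<Sum>c=1..N. ((\<Sum>a=1..N. g (real c) (real a)) - h (real c))) + ((\<Sum>c=1..N. h (real c)) - (\<integral>y. h y \<partial>lborel))\<bar>"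
    by (simp add: sum_subtractf)
  also have "\<dots> \<le> 135 * A^4 / kr + 15 * A^4 / kr" using e2 e3 by linarith
  also have "\<dots> = 150 * A^4 / real k * indicator {X..2*X} x" using True unfolding kr_def by simp
  finally show ?thesis .
qed

end

context PS begin

lemma fub3:
  assumes kr0: "0 < kr"
  shows "(\<integral>(x, y, z). Psi (kr*z) (kr*y) x \<partial>(lborel :: (real \<times> real \<times> real) measure))
       = (\<integral>x. (\<integral>y. (\<integral>z. Psi (kr*z) (kr*y) x \<partial>lborel) \<partial>lborel) \<partial>lborel)"
    and "integrable lborel (\<lambda>x. (\<integral>y. (\<integral>z. Psi (kr*z) (kr*y) x \<partial>lborel) \<partial>lborel))"
proof -
  define \<alpha> where "\<alpha> = X/(l*kr)"
  define \<beta> where "\<beta> = 2*X/(l*kr)"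
  have suppr: "Psi (kr*z) (kr*y) x = 0" if "x \<notin> {X..2*X} \<or> y \<notin> {\<alpha>..\<beta>} \<or> z \<notin> {\<alpha>..\<beta>}" for x y z
  proof (rule ccontr)
    assume "Psi (kr*z) (kr*y) x \<noteq> 0"
    from Psi_nz[OF this] have "x \<in> {X..2*X}" "y \<in> {\<alpha>..\<beta>}" "z \<in> {\<alpha>..\<beta>}" unfolding \<alpha>_def \<beta>_def
      using kr0 lpos by (auto simp: field_simps)
    then show False using that by auto
  qed
  have i3: "integrable lborel (\<lambda>p::real \<times> real \<times> real. Psi (kr * snd (snd p)) (kr * fst (snd p)) (fst p))"
  proof (rule cont_compact_integrable[of _ "{X..2*X} \<times> {\<alpha>..\<beta>} \<times> {\<alpha>..\<beta>}"])
    show "continuous_on UNIV (\<lambda>p::real \<times> real \<times> real. Psi (kr * snd (snd p)) (kr * fst (snd p)) (fst p))"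
      by (intro continuous_intros)
    show "compact ({X..2*X} \<times> {\<alpha>..\<beta>} \<times> {\<alpha>..\<beta>})" by (intro compact_Times compact_Icc)
    fix p :: "real \<times> real \<times> real" assume "p \<notin> {X..2*X} \<times> {\<alpha>..\<beta>} \<times> {\<alpha>..\<beta>}"
    then show "Psi (kr * snd (snd p)) (kr * fst (snd p)) (fst p) = 0" using suppr
      by (cases p) auto
  qed
  have i2: "integrable lborel (\<lambda>q::real \<times> real. Psi (kr * snd q) (kr * fst q) x)" for x
  proof (rule cont_compact_integrable[of _ "{\<alpha>..\<beta>} \<times> {\<alpha>..\<beta>}"])
    show "continuous_on UNIV (\<lambda>q::real \<times> real. Psi (kr * snd q) (kr * fst q) x)"
      by (intro continuous_intros)
    show "compact ({\<alpha>..\<beta>} \<times> {\<alpha>..\<beta>})" by (intro compact_Times compact_Icc)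
    fix q :: "real \<times> real" assume "q \<notin> {\<alpha>..\<beta>} \<times> {\<alpha>..\<beta>}"
    then show "Psi (kr * snd q) (kr * fst q) x = 0" using suppr by (cases q) auto
  qed
  have e2: "(\<integral>q. Psi (kr * snd q) (kr * fst q) x \<partial>lborel) = (\<integral>y. (\<integral>z. Psi (kr*z) (kr*y) x \<partial>lborel) \<partial>lborel)" for x
    using fubini_lborel(1)[OF i2[of x]] by simp
  have eqf: "(\<lambda>(x, y, z). Psi (kr*z) (kr*y) x) = (\<lambda>p::real \<times> real \<times> real. Psi (kr * snd (snd p)) (kr * fst (snd p)) (fst p))"
    by (auto simp: fun_eq_iff)
  show "(\<integral>(x, y, z). Psi (kr*z) (kr*y) x \<partial>(lborel :: (real \<times> real \<times> real) measure))
       = (\<integral>x. (\<integral>y. (\<integral>z. Psi (kr*z) (kr*y) x \<partial>lborel) \<partial>lborel) \<partial>lborel)"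
    unfolding eqf using fubini_lborel(1)[OF i3] e2 by simp
  show "integrable lborel (\<lambda>x. (\<integral>y. (\<integral>z. Psi (kr*z) (kr*y) x \<partial>lborel) \<partial>lborel))"
    using fubini_lborel(2)[OF i3] e2 by simp
qed

lemma E_bound:
  fixes k N :: nat
  assumes k1: "1 \<le> k" and kb: "real k \<le> 2*X/l" and N: "N = nat \<lfloor>2*X/l\<rfloor>"
  shows "\<bar>(\<Sum>a=1..N. \<Sum>c=1..N. (\<integral>x. Psi (real k * real a) (real k * real c) x \<partial>lborel))
          - (\<integral>x. (\<integral>y. (\<integral>z. Psi (real k * z) (real k * y) x \<partial>lborel) \<partial>lborel) \<partial>lborel)\<bar>
         \<le> 150 * A^4 * X / real k"
proof -
  have k0: "0 < real k" using k1 by simp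
  have s: "(\<Sum>a=1..N. \<Sum>c=1..N. (\<integral>x. Psi (real k * real a) (real k * real c) x \<partial>lborel))
      = (\<integral>x. (\<Sum>a=1..N. \<Sum>c=1..N. Psi (real k * real a) (real k * real c) x) \<partial>lborel)"
    by (simp add: integral_sum Psi_int_x)
  have "(\<Sum>a=1..N. \<Sum>c=1..N. (\<integral>x. Psi (real k * real a) (real k * real c) x \<partial>lborel))
          - (\<integral>x. (\<integral>y. (\<integral>z. Psi (real k * z) (real k * y) x \<partial>lborel) \<partial>lborel) \<partial>lborel)
      = (\<integral>x. ((\<Sum>a=1..N. \<Sum>c=1..N. Psi (real k * real a) (real k * real c) x)
            - (\<integral>y. (\<integral>z. Psi (real k * z) (real k * y) x \<partial>lborel) \<partial>lborel)) \<partial>lborel)"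
    unfolding s by (rule Bochner_Integration.integral_diff[symmetric]) (use fub3(2)[OF k0] in \<open>auto intro!: integrable_sum Psi_int_x\<close>)
  also have "\<bar>\<dots>\<bar> \<le> (150 * A^4 / real k) * (2*X - X)"
    by (rule int_bound_interval) (use lattice_x[OF k1 kb N] Xpos in auto)
  finally show ?thesis by simp
qed

lemma J_bound:
  assumes kr0: "0 < kr"
  shows "\<bar>\<integral>x. (\<integral>y. (\<integral>z. Psi (kr*z) (kr*y) x \<partial>lborel) \<partial>lborel) \<partial>lborel\<bar> \<le> A^4 * X^2 / (l * kr^2)"
proof -
  define \<alpha> where "\<alpha> = X/(l*kr)"
  define \<beta> where "\<beta> = 2*X/(l*kr)"
  have \<alpha>\<beta>: "\<alpha> \<le> \<beta>" unfolding \<alpha>_def \<beta>_def using Xpos lpos kr0 by (simp add: divide_right_mono)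
  have ba: "\<beta> - \<alpha> = X/(l*kr)" unfolding \<alpha>_def \<beta>_def by (simp add: field_simps)
  have suppr: "Psi (kr*z) (kr*y) x = 0" if "x \<notin> {X..2*X} \<or> y \<notin> {\<alpha>..\<beta>} \<or> z \<notin> {\<alpha>..\<beta>}" for x y z
  proof (rule ccontr)
    assume "Psi (kr*z) (kr*y) x \<noteq> 0"
    from Psi_nz[OF this] have "x \<in> {X..2*X}" "y \<in> {\<alpha>..\<beta>}" "z \<in> {\<alpha>..\<beta>}" unfolding \<alpha>_def \<beta>_def
      using kr0 lpos by (auto simp: field_simps)
    then show False using that by auto
  qed
  have b1: "\<bar>\<integral>z. Psi (kr*z) (kr*y) x \<partial>lborel\<bar> \<le> (A^4 / kr * indicator {X..2*X} x) * indicator {\<alpha>..\<beta>} y" for x y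
  proof (cases "x \<in> {X..2*X} \<and> y \<in> {\<alpha>..\<beta>}")
    case True
    have "\<bar>\<integral>z. Psi (kr*z) (kr*y) x \<partial>lborel\<bar> \<le> (A^4 * (l/X)) * (\<beta> - \<alpha>)"
    proof (rule int_bound_interval[OF _ \<alpha>\<beta>])
      fix z show "\<bar>Psi (kr*z) (kr*y) x\<bar> \<le> A^4 * (l/X) * indicator {\<alpha>..\<beta>} z"
        using Psi_bd suppr by (cases "z \<in> {\<alpha>..\<beta>}") auto
    qed
    also have "\<dots> = A^4 / kr" unfolding ba using Xpos lpos kr0 by (simp add: field_simps)
    finally show ?thesis using True by simp
  next
    case False
    then have "Psi (kr*z) (kr*y) x = 0" for z using suppr by auto
    then have fz: "(\<lambda>z. Psi (kr*z) (kr*y) x) = (\<lambda>_. 0)" by (simp add: fun_eq_iff)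
    have "0 \<le> (A^4 / kr * indicator {X..2*X} x) * indicator {\<alpha>..\<beta>} y" using A1 kr0 by simp
    then show ?thesis unfolding fz by simp
  qed
  have b2: "\<bar>\<integral>y. (\<integral>z. Psi (kr*z) (kr*y) x \<partial>lborel) \<partial>lborel\<bar> \<le> (A^4 * X / (l * kr^2)) * indicator {X..2*X} x" for x
  proof -
    have "\<bar>\<integral>y. (\<integral>z. Psi (kr*z) (kr*y) x \<partial>lborel) \<partial>lborel\<bar> \<le> (A^4 / kr * indicator {X..2*X} x) * (\<beta> - \<alpha>)"
      by (rule int_bound_interval[OF b1 \<alpha>\<beta>])
    also have "\<dots> = (A^4 * X / (l * kr^2)) * indicator {X..2*X} x"
      unfolding ba using Xpos lpos kr0 by (simp add: field_simps power2_eq_square)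
    finally show ?thesis .
  qed
  have "\<bar>\<integral>x. (\<integral>y. (\<integral>z. Psi (kr*z) (kr*y) x \<partial>lborel) \<partial>lborel) \<partial>lborel\<bar> \<le> (A^4 * X / (l * kr^2)) * (2*X - X)"
    by (rule int_bound_interval[OF b2]) (use Xpos in auto)
  also have "\<dots> = A^4 * X^2 / (l * kr^2)" by (simp add: power2_eq_square)
  finally show ?thesis .
qed

end

lemma tele_sum:
  fixes K :: real
  shows "n \<le> M \<Longrightarrow> (\<Sum>k\<in>{n<..M}. 2*K/(real k * (real k + 1))) = 2*K/(real n + 1) - 2*K/(real M + 1)"
proof (induction M)
  case 0 then show ?case by simp
next
  case (Suc M)
  show ?case
  proof (cases "n = Suc M")
    case True then show ?thesis by simp
  next
    case False
    then have nM: "n \<le> M" using Suc.prems by simp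
    have "{n<..Suc M} = insert (Suc M) {n<..M}" using nM by auto
    then have "(\<Sum>k\<in>{n<..Suc M}. 2*K/(real k * (real k + 1)))
        = 2*K/(real (Suc M) * (real (Suc M) + 1)) + (\<Sum>k\<in>{n<..M}. 2*K/(real k * (real k + 1)))"
      by simp
    also have "\<dots> = 2*K/(real (Suc M) * (real (Suc M) + 1)) + (2*K/(real n + 1) - 2*K/(real M + 1))"
      using Suc.IH[OF nM] by simp
    also have "\<dots> = 2*K/(real n + 1) - 2*K/(real (Suc M) + 1)"
    proof -
      have t1: "real M + 1 \<noteq> 0" "real M + 2 \<noteq> 0" by linarith+
      have "2*K/(real (Suc M) * (real (Suc M) + 1)) = 2*K/(real M + 1) - 2*K/(real (Suc M) + 1)"
        using t1 by (simp add: field_simps)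
      then show ?thesis by simp
    qed
    finally show ?thesis .
  qed
qed

lemma tail_sum:
  fixes f :: "nat \<Rightarrow> real"
  assumes fb: "\<And>k. 1 \<le> k \<Longrightarrow> \<bar>f k\<bar> \<le> K / (real k)^2" and K0: "0 \<le> K"
  shows "f summable_on {k. n < k}" and "\<bar>infsum f {k. n < k}\<bar> \<le> 2*K/(real n + 1)"
proof -
  define g where "g k = 2*K/(real k * (real k + 1))" for k
  have g0: "0 \<le> g k" for k unfolding g_def using K0 by simp
  have fin: "sum g F \<le> 2*K/(real n + 1)" if "finite F" "F \<subseteq> {k. n < k}" for F
  proof (cases "F = {}")
    case True then show ?thesis using K0 by simp
  next
    case False
    define M where "M = Max F"
    have FM: "F \<subseteq> {n<..M}" using that False unfolding M_def by auto
    have nM: "n \<le> M" using FM False by auto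
    have "sum g F \<le> sum g {n<..M}" by (rule sum_mono2) (use FM g0 in auto)
    also have "\<dots> = 2*K/(real n + 1) - 2*K/(real M + 1)" unfolding g_def by (rule tele_sum[OF nM])
    also have "\<dots> \<le> 2*K/(real n + 1)" using K0 by simp
    finally show ?thesis .
  qed
  have gs: "g summable_on {k. n < k}"
  proof (rule nonneg_bdd_above_summable_on)
    show "0 \<le> g x" for x by (rule g0)
    show "bdd_above (sum g ` {F. F \<subseteq> {k. n < k} \<and> finite F})"
      using fin by (auto intro!: bdd_aboveI[of _ "2*K/(real n + 1)"])
  qed
  have fg: "\<bar>f k\<bar> \<le> g k" if "k \<in> {k. n < k}" for k
  proof -
    have k1: "1 \<le> k" using that by auto
    have kk: "real k \<le> real k * real k" using k1 by (simp add: mult_le_cancel_left1)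
    have "K / (real k)^2 = 2*K/(2*(real k * real k))" by (simp add: power2_eq_square)
    also have "\<dots> \<le> 2*K/(real k * (real k + 1))"
    proof (rule divide_left_mono)
      show "real k * (real k + 1) \<le> 2 * (real k * real k)" using kk by (simp add: algebra_simps)
      show "0 \<le> 2 * K" using K0 by simp
      have "0 < real k" using k1 by simp
      then show "0 < 2 * (real k * real k) * (real k * (real k + 1))" by simp
    qed
    finally show ?thesis using fb[OF k1] unfolding g_def by linarith
  qed
  have fa: "(\<lambda>k. norm (f k)) summable_on {k. n < k}"
    by (rule summable_on_comparison_test[OF gs]) (use fg in auto)
  then show fs: "f summable_on {k. n < k}" by (rule abs_summable_summable)
  have "\<bar>infsum f {k. n < k}\<bar> = norm (infsum f {k. n < k})" by simp
  also have "\<dots> \<le> infsum (\<lambda>k. norm (f k)) {k. n < k}" by (rule norm_infsum_bound[OF fa])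
  also have "\<dots> \<le> infsum g {k. n < k}" by (rule infsum_mono[OF fa gs]) (use fg in auto)
  also have "\<dots> \<le> 2*K/(real n + 1)" by (rule infsum_le_finite_sums[OF gs]) (use fin in auto)
  finally show "\<bar>infsum f {k. n < k}\<bar> \<le> 2*K/(real n + 1)" .
qed

lemma harm_bound:
  assumes "1 \<le> N"
  shows "(harm N :: real) \<le> 1 + ln (real N)"
proof -
  obtain n where n: "N = Suc n" using assms by (cases N) auto
  have "harm (Suc n) - ln (real (Suc n)) \<le> (harm (Suc 0) - ln (real (Suc 0)) :: real)"
    using decseq_harm_diff_ln unfolding decseq_def by (metis le0 of_nat_Suc)
  then show ?thesis using n by (simp add: harm_expand)
qed

lemma mu_abs_le: "\<bar>moebius_mu k\<bar> \<le> 1"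
  by (simp add: moebius_mu_def)

context PS begin

lemma D1:
  assumes r1i: "real_of_int r1i = r1" and li: "l = real li"
  shows "(1 / real a) * V (real li * real a / X) * V (real li * real c / X) * Vhat0 V X r1i a c
       = (\<integral>x. Psi (real a) (real c) x \<partial>lborel)"
proof (cases "V (real li * real a / X) = 0")
  case True
  then have "Psi (real a) (real c) x = 0" for x unfolding Psi_def using li by simp
  then have "(\<lambda>x. Psi (real a) (real c) x) = (\<lambda>_. 0)" by (simp add: fun_eq_iff)
  then show ?thesis using True by simp
next
  case False
  then have aX: "X/l \<le> real a" using range_of[of "real a"] li by simp
  then have ma: "m (real a) = real a" by (rule m_eq)
  have "Psi (real a) (real c) x = ((1 / real a) * V (real li * real a / X) * V (real li * real c / X))
          * (V (x / X) * V ((real_of_int r1i + x * real c) / (real a * X)))" for x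
    unfolding Psi_def ma unfolding li r1i by simp
  then show ?thesis unfolding Vhat0_def by simp
qed

lemma D2:
  assumes rr: "real_of_int r = l * r1" and li: "l = real li" and k1: "1 \<le> k"
  shows "main_integral V X r li k = real k * (\<integral>x. (\<integral>y. (\<integral>z. Psi (real k * z) (real k * y) x \<partial>lborel) \<partial>lborel) \<partial>lborel)"
proof -
  have kr0: "0 < real k" using k1 by simp
  have li0: "0 < real li" using lpos li by simp
  have pw: "(1 / z) * V (x / X) * V (real li * real k * y / X) * V (real li * real k * z / X)
       * V ((real_of_int r + real li * real k * x * y) / (z * real li * real k * X))
       = real k * Psi (real k * z) (real k * y) x" for x y z
  proof (cases "V (real li * real k * z / X) = 0")
    case True
    then show ?thesis unfolding Psi_def using li by (simp add: mult.assoc)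
  next
    case False
    then have "V (l * (real k * z) / X) \<noteq> 0" unfolding li by (simp add: mult.assoc)
    then have kz: "X/l \<le> real k * z" by (rule range_of)
    then have mz: "m (real k * z) = real k * z" by (rule m_eq)
    have "0 < real k * z" using kz Xlpos by linarith
    then have z0: "0 < z" using kr0 by (simp add: zero_less_mult_iff)
    have arg: "(real_of_int r + real li * real k * x * y) / (z * real li * real k * X)
        = (r1 + x * (real k * y)) / (real k * z * X)"
      unfolding rr li using z0 kr0 li0 Xpos by (simp add: field_simps)
    have a2: "real li * real k * y / X = real li * (real k * y) / X" "real li * real k * z / X = real li * (real k * z) / X"
      by (simp_all add: mult.assoc)
    have e: "(1/z) * w1 * w2 * w3 * w4 = real k * (w3 * w2 * w1 * w4 / (real k * z))" for w1 w2 w3 w4 :: real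
      using z0 kr0 by (simp add: field_simps)
    show ?thesis unfolding Psi_def mz unfolding arg li a2 by (rule e)
  qed
  have "main_integral V X r li k = (\<integral>(x, y, z). real k * Psi (real k * z) (real k * y) x \<partial>(lborel :: (real \<times> real \<times> real) measure))"
    unfolding main_integral_def pw ..
  also have "(\<lambda>(x::real, y::real, z::real). real k * Psi (real k * z) (real k * y) x)
      = (\<lambda>p. real k * (\<lambda>(x, y, z). Psi (real k * z) (real k * y) x) p)" by (auto simp: fun_eq_iff)
  also have "(\<integral>p. real k * (\<lambda>(x, y, z). Psi (real k * z) (real k * y) x) p \<partial>(lborel :: (real \<times> real \<times> real) measure))
      = real k * (\<integral>(x, y, z). Psi (real k * z) (real k * y) x \<partial>(lborel :: (real \<times> real \<times> real) measure))"
    by (rule integral_mult_right_zero)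
  also have "\<dots> = real k * (\<integral>x. (\<integral>y. (\<integral>z. Psi (real k * z) (real k * y) x \<partial>lborel) \<partial>lborel) \<partial>lborel)"
    using fub3(1)[OF kr0] by simp
  finally show ?thesis .
qed


lemma per_l:
  fixes li :: nat and r r1i :: int and \<epsilon> :: real
  assumes r1i: "real_of_int r1i = r1" and li: "l = real li" and rr: "real_of_int r = l * r1" and eps: "0 < \<epsilon>"
  shows "\<bar>(\<Sum>\<^sub>\<infinity>(a, c)\<in>{(a, c). 1 \<le> a \<and> 1 \<le> c \<and> coprime a c}.
             (1 / real a) * V (real li * real a / X) * V (real li * real c / X) * Vhat0 V X r1i a c)
        - (\<Sum>\<^sub>\<infinity>k\<in>{k::nat. 1 \<le> k}. moebius_mu k / real k * main_integral V X r li k)\<bar>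
      \<le> (150 * A^4 * (2 + 1/\<epsilon>) + A^4) * X powr (1 + \<epsilon>)"
proof -
  define N where "N = nat \<lfloor>2*X/l\<rfloor>"
  define \<Phi> where "\<Phi> a c = (\<integral>x. Psi (real a) (real c) x \<partial>lborel)" for a c :: nat
  define J where "J k = (\<integral>x. (\<integral>y. (\<integral>z. Psi (real k * z) (real k * y) x \<partial>lborel) \<partial>lborel) \<partial>lborel)" for k :: nat
  define D where "D k = (\<Sum>a=1..N. \<Sum>c=1..N. \<Phi> (k*a) (k*c))" for k :: nat
  have one: "(1::real) \<le> 1" by simp
  have \<Phi>z: "\<Phi> a c = 0" if "a > N \<or> c > N" for a c
  proof -
    have "Psi (real a) (real c) x = 0" for x
      using that Psi_zero_big(1)[OF one N_def, of a "real c" x] Psi_zero_big(2)[OF one N_def, of c "real a" x] by auto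
    then have "(\<lambda>x. Psi (real a) (real c) x) = (\<lambda>_. 0)" by (simp add: fun_eq_iff)
    then show ?thesis unfolding \<Phi>_def by simp
  qed
  have NX: "real N \<le> 2*X/l" unfolding N_def using Xlpos by linarith
  have NX1: "2*X/l \<le> real N + 1" unfolding N_def using Xlpos by linarith
  have S: "(\<Sum>\<^sub>\<infinity>(a, c)\<in>{(a, c). 1 \<le> a \<and> 1 \<le> c \<and> coprime a c}.
             (1 / real a) * V (real li * real a / X) * V (real li * real c / X) * Vhat0 V X r1i a c)
         = (\<Sum>k=1..N. moebius_mu k * D k)"
  proof -
    have "(\<Sum>\<^sub>\<infinity>(a, c)\<in>{(a, c). 1 \<le> a \<and> 1 \<le> c \<and> coprime a c}.
             (1 / real a) * V (real li * real a / X) * V (real li * real c / X) * Vhat0 V X r1i a c)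
        = (\<Sum>\<^sub>\<infinity>(a, c)\<in>{(a, c). 1 \<le> a \<and> 1 \<le> c \<and> coprime a c}. \<Phi> a c)"
    proof (rule infsum_cong)
      fix p :: "nat \<times> nat"
      obtain a c where p: "p = (a, c)" by (cases p)
      show "(case p of (a, c) \<Rightarrow> (1 / real a) * V (real li * real a / X) * V (real li * real c / X) * Vhat0 V X r1i a c)
          = (case p of (a, c) \<Rightarrow> \<Phi> a c)"
        unfolding p prod.case \<Phi>_def by (rule D1[OF r1i li])
    qed
    also have "\<dots> = (\<Sum>\<^sub>\<infinity>(a, c)\<in>({1..N} \<times> {1..N}) \<inter> {(a, c). coprime a c}. \<Phi> a c)"
      by (rule infsum_cong_neutral) (auto, (metis \<Phi>z not_le)+)
    also have "\<dots> = (\<Sum>(a, c)\<in>({1..N} \<times> {1..N}) \<inter> {(a, c). coprime a c}. \<Phi> a c)"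
      by (rule infsum_finite) simp
    also have "\<dots> = (\<Sum>p\<in>{1..N} \<times> {1..N}. if p \<in> {(a, c). coprime a c} then (case p of (a, c) \<Rightarrow> \<Phi> a c) else 0)"
      by (rule sum.inter_restrict) simp
    also have "\<dots> = (\<Sum>(a, c)\<in>{1..N} \<times> {1..N}. if coprime a c then \<Phi> a c else 0)"
      by (rule sum.cong) auto
    also have "\<dots> = (\<Sum>a=1..N. \<Sum>c=1..N. if coprime a c then \<Phi> a c else 0)"
      by (rule sum.cartesian_product[symmetric])
    also have "\<dots> = (\<Sum>k=1..N. moebius_mu k * D k)"
      unfolding D_def by (rule coprime_mobius_sum) (rule \<Phi>z)
    finally show ?thesis .
  qed
  define f where "f k = moebius_mu k * J k" for k :: nat
  have T: "(\<Sum>\<^sub>\<infinity>k\<in>{k::nat. 1 \<le> k}. moebius_mu k / real k * main_integral V X r li k)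
         = (\<Sum>\<^sub>\<infinity>k\<in>{k::nat. 1 \<le> k}. f k)"
  proof (rule infsum_cong)
    fix k :: nat assume "k \<in> {k. 1 \<le> k}"
    then have k1: "1 \<le> k" by simp
    show "moebius_mu k / real k * main_integral V X r li k = f k"
      unfolding f_def D2[OF rr li k1] J_def using k1 by simp
  qed
  define K where "K = A^4 * X^2 / l"
  have K0: "0 \<le> K" unfolding K_def using lpos by simp
  have fb: "\<bar>f k\<bar> \<le> K / (real k)^2" if "1 \<le> k" for k
  proof -
    have "\<bar>f k\<bar> = \<bar>moebius_mu k\<bar> * \<bar>J k\<bar>" unfolding f_def by (simp add: abs_mult)
    also have "\<dots> \<le> 1 * (A^4 * X^2 / (l * (real k)^2))"
      unfolding J_def using mu_abs_le J_bound[of "real k"] that by (intro mult_mono) auto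
    also have "\<dots> = K / (real k)^2" unfolding K_def by simp
    finally show ?thesis .
  qed
  have fs0: "f summable_on {k. 0 < k}" by (rule tail_sum(1)[OF fb K0]) auto
  have fsN: "f summable_on {k. N < k}" by (rule tail_sum(1)[OF fb K0]) auto
  have tail: "\<bar>infsum f {k. N < k}\<bar> \<le> 2*K/(real N + 1)" by (rule tail_sum(2)[OF fb K0]) auto
  have split: "{k::nat. 1 \<le> k} = {1..N} \<union> {k. N < k}" by auto
  have Tsplit: "(\<Sum>\<^sub>\<infinity>k\<in>{k::nat. 1 \<le> k}. f k) = (\<Sum>k=1..N. f k) + infsum f {k. N < k}"
    unfolding split by (subst infsum_Un_disjoint) (auto intro: fsN)
  have Eb: "\<bar>D k - J k\<bar> \<le> 150 * A^4 * X / real k" if "k \<in> {1..N}" for k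
  proof -
    have k1: "1 \<le> k" and kN: "k \<le> N" using that by auto
    have kb: "real k \<le> 2*X/l" using kN NX by linarith
    have "D k = (\<Sum>a=1..N. \<Sum>c=1..N. (\<integral>x. Psi (real k * real a) (real k * real c) x \<partial>lborel))"
      unfolding D_def \<Phi>_def by simp
    then show ?thesis unfolding J_def using E_bound[OF k1 kb N_def] by simp
  qed
  have hb: "(harm N :: real) \<le> (2 + 1/\<epsilon>) * X powr \<epsilon>"
  proof -
    have Xe: "1 \<le> X powr \<epsilon>" using X2 eps by (simp add: ge_one_powr_ge_zero)
    have lX: "ln X \<le> X powr \<epsilon> / \<epsilon>" using ln_powr_bound[of X \<epsilon>] X2 eps by simp
    show ?thesis
    proof (cases "N = 0")
      case True
      then show ?thesis using Xe eps by (simp add: harm_expand)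
    next
      case False
      then have N1: "1 \<le> N" by simp
      have "2*X \<le> 2*X*l" using l1 Xpos by simp
      then have "2*X/l \<le> 2*X" using lpos by (simp add: divide_le_eq)
      then have "real N \<le> 2 * X" using NX by linarith
      then have "ln (real N) \<le> ln (2 * X)" using N1 by simp
      also have "\<dots> = ln 2 + ln X" using Xpos by (simp add: ln_mult)
      also have "\<dots> \<le> 1 + X powr \<epsilon> / \<epsilon>" using lX ln_2_less_1 by linarith
      finally have "harm N \<le> 2 + X powr \<epsilon> / \<epsilon>" using harm_bound[OF N1] by linarith
      also have "\<dots> \<le> 2 * X powr \<epsilon> + X powr \<epsilon> / \<epsilon>" using Xe by linarith
      also have "\<dots> = (2 + 1/\<epsilon>) * X powr \<epsilon>" by (simp add: field_simps)
      finally show ?thesis .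
    qed
  qed
  have Xpe: "X powr (1 + \<epsilon>) = X * X powr \<epsilon>" using Xpos by (simp add: powr_add)
  have XleXe: "X \<le> X powr (1 + \<epsilon>)" unfolding Xpe using X2 eps Xpos by (simp add: ge_one_powr_ge_zero)
  have part1: "\<bar>\<Sum>k=1..N. moebius_mu k * (D k - J k)\<bar> \<le> 150 * A^4 * (2 + 1/\<epsilon>) * X powr (1 + \<epsilon>)"
  proof -
    have "\<bar>\<Sum>k=1..N. moebius_mu k * (D k - J k)\<bar> \<le> (\<Sum>k=1..N. \<bar>moebius_mu k * (D k - J k)\<bar>)" by (rule sum_abs)
    also have "\<dots> \<le> (\<Sum>k=1..N. 150 * A^4 * X * inverse (real k))"
    proof (rule sum_mono)
      fix k assume k: "k \<in> {1..N}"
      have "\<bar>moebius_mu k * (D k - J k)\<bar> = \<bar>moebius_mu k\<bar> * \<bar>D k - J k\<bar>" by (simp add: abs_mult)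
      also have "\<dots> \<le> 1 * (150 * A^4 * X / real k)" using mu_abs_le Eb[OF k] by (intro mult_mono) auto
      finally show "\<bar>moebius_mu k * (D k - J k)\<bar> \<le> 150 * A^4 * X * inverse (real k)" by (simp add: divide_inverse)
    qed
    also have "\<dots> = 150 * A^4 * X * harm N" by (simp add: harm_def sum_distrib_left)
    also have "\<dots> \<le> 150 * A^4 * X * ((2 + 1/\<epsilon>) * X powr \<epsilon>)"
      using hb A1 Xpos by (intro mult_left_mono) auto
    also have "\<dots> = 150 * A^4 * (2 + 1/\<epsilon>) * X powr (1 + \<epsilon>)" unfolding Xpe by simp
    finally show ?thesis .
  qed
  have part2: "\<bar>infsum f {k. N < k}\<bar> \<le> A^4 * X powr (1 + \<epsilon>)"
  proof -
    have "2*K/(real N + 1) \<le> 2*K/(2*X/l)"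
      using NX1 K0 Xlpos Xpos lpos by (intro divide_left_mono) (auto simp: zero_less_mult_iff zero_less_divide_iff)
    also have "\<dots> = A^4 * X" unfolding K_def using Xpos lpos by (simp add: field_simps power2_eq_square)
    also have "\<dots> \<le> A^4 * X powr (1 + \<epsilon>)" using XleXe A1 by (intro mult_left_mono) auto
    finally show ?thesis using tail by linarith
  qed
  have "(\<Sum>k=1..N. moebius_mu k * D k) - ((\<Sum>k=1..N. f k) + infsum f {k. N < k})
      = (\<Sum>k=1..N. moebius_mu k * (D k - J k)) - infsum f {k. N < k}"
    unfolding f_def by (simp add: sum_subtractf right_diff_distrib)
  then show ?thesis unfolding S T Tsplit using part1 part2 by (simp add: algebra_simps)
qed

end

lemma pos_divisors_eq:
  assumes "r \<noteq> 0"
  shows "pos_divisors r = {d. d dvd nat \<bar>r\<bar>}"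
proof -
  have "0 < l \<and> int l dvd r \<longleftrightarrow> l dvd nat \<bar>r\<bar>" for l :: nat
  proof
    assume "0 < l \<and> int l dvd r"
    then have "int l dvd \<bar>r\<bar>" by simp
    then have "int l dvd int (nat \<bar>r\<bar>)" by simp
    then show "l dvd nat \<bar>r\<bar>" by (simp only: of_nat_dvd_iff)
  next
    assume "l dvd nat \<bar>r\<bar>"
    then have "int l dvd int (nat \<bar>r\<bar>)" by (simp only: of_nat_dvd_iff)
    then have "int l dvd r" by simp
    moreover have "l \<noteq> 0" using \<open>l dvd nat \<bar>r\<bar>\<close> assms by auto
    ultimately show "0 < l \<and> int l dvd r" by simp
  qed
  then show ?thesis unfolding pos_divisors_def by auto
qed

theorem proposition4p1:
  fixes V :: "real \<Rightarrow> real" and \<epsilon> :: real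
  assumes "smooth_fun V"
    and "\<And>t. t \<notin> {1..2} \<Longrightarrow> V t = 0"
    and "\<epsilon> > 0"
  shows "\<exists>C. \<forall>X::real. \<forall>r::int. X \<ge> 2 \<and> r \<noteq> 0 \<and> real_of_int \<bar>r\<bar> \<le> 3 * X\<^sup>2 \<longrightarrow>
           \<bar>M_V V X r - main_term V X r\<bar> \<le> C * real (divisor_tau (nat \<bar>r\<bar>)) * X powr (1 + \<epsilon>)"
proof -
  obtain B where B: "B \<ge> 0" "\<forall>t. \<bar>V t\<bar> \<le> B" using smooth_V_props(2)[OF assms(1,2)] by blast
  obtain L where L: "L \<ge> 0" "\<forall>s t. \<bar>V s - V t\<bar> \<le> L * \<bar>s - t\<bar>" using smooth_V_props(3)[OF assms(1,2)] by blast
  define A where "A = max 1 (max B L)"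
  have A1: "1 \<le> A" unfolding A_def by simp
  have Vbd: "\<bar>V t\<bar> \<le> A" for t using B unfolding A_def by (meson max.cobounded1 max.cobounded2 order_trans)
  have Vlip: "\<bar>V s - V t\<bar> \<le> A * \<bar>s - t\<bar>" for s t
  proof -
    have "L \<le> A" unfolding A_def by simp
    then have "L * \<bar>s - t\<bar> \<le> A * \<bar>s - t\<bar>" by (rule mult_right_mono) simp
    then show ?thesis using L(2) by (meson order_trans)
  qed
  define C where "C = 150 * A^4 * (2 + 1/\<epsilon>) + A^4"
  show ?thesis
  proof (intro exI[of _ C] allI impI)
    fix X :: real and r :: int
    assume H: "X \<ge> 2 \<and> r \<noteq> 0 \<and> real_of_int \<bar>r\<bar> \<le> 3 * X\<^sup>2"
    have X2: "2 \<le> X" and r0: "r \<noteq> 0" and rb: "real_of_int \<bar>r\<bar> \<le> 3 * X\<^sup>2" using H by auto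
    define Sl where "Sl l = (\<Sum>\<^sub>\<infinity>(a, c)\<in>{(a, c). 1 \<le> a \<and> 1 \<le> c \<and> coprime a c}.
        (1 / real a) * V (real l * real a / X) * V (real l * real c / X) * Vhat0 V X (r div int l) a c)" for l :: nat
    define Tl where "Tl l = (\<Sum>\<^sub>\<infinity>k\<in>{k::nat. 1 \<le> k}. moebius_mu k / real k * main_integral V X r l k)" for l :: nat
    have each: "\<bar>Sl l - Tl l\<bar> \<le> C * X powr (1 + \<epsilon>)" if l: "l \<in> pos_divisors r" for l
    proof -
      have l0: "0 < l" and ldvd: "int l dvd r" using l unfolding pos_divisors_def by auto
      define r1 where "r1 = real_of_int (r div int l)"
      have "r = int l * (r div int l)" using ldvd by simp
      then have rr: "real_of_int r = real l * r1" unfolding r1_def by (metis of_int_mult of_int_of_nat_eq)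
      have r1b: "\<bar>r1\<bar> \<le> 3 * X^2 / real l"
      proof -
        have "\<bar>real_of_int r\<bar> = real l * \<bar>r1\<bar>" using rr by (simp add: abs_mult)
        then have "real l * \<bar>r1\<bar> \<le> 3 * X^2" using rb by simp
        then show ?thesis using l0 by (simp add: field_simps)
      qed
      interpret P: PS V A X "real l" r1
        by unfold_locales (use assms(2) Vbd Vlip A1 X2 l0 r1b in auto)
      have "\<bar>Sl l - Tl l\<bar> \<le> (150 * A^4 * (2 + 1/\<epsilon>) + A^4) * X powr (1 + \<epsilon>)"
        unfolding Sl_def Tl_def by (rule P.per_l[OF r1_def[symmetric] refl rr assms(3)])
      then show ?thesis unfolding C_def .
    qed
    have fin: "finite (pos_divisors r)" unfolding pos_divisors_eq[OF r0] by (rule finite_divisors_nat) (use r0 in simp)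
    have card: "card (pos_divisors r) = divisor_tau (nat \<bar>r\<bar>)"
      unfolding divisor_tau_def pos_divisors_eq[OF r0] ..
    have "M_V V X r - main_term V X r = (\<Sum>l\<in>pos_divisors r. Sl l - Tl l)"
      unfolding M_V_def main_term_def Sl_def Tl_def by (simp add: sum_subtractf)
    also have "\<bar>\<dots>\<bar> \<le> (\<Sum>l\<in>pos_divisors r. \<bar>Sl l - Tl l\<bar>)" by (rule sum_abs)
    also have "\<dots> \<le> (\<Sum>l\<in>pos_divisors r. C * X powr (1 + \<epsilon>))" by (rule sum_mono) (rule each)
    also have "\<dots> = C * real (divisor_tau (nat \<bar>r\<bar>)) * X powr (1 + \<epsilon>)" using card by simp
    finally show "\<bar>M_V V X r - main_term V X r\<bar> \<le> C * real (divisor_tau (nat \<bar>r\<bar>)) * X powr (1 + \<epsilon>)" .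
  qed
qed

end
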